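(* Let $\mathrm{R}$ be a real closed field, $\mathrm{C}=\mathrm{R}[i]$, let $F/G\in\mathrm{C}(Z)\setminus\{0\}$, $\gamma\in\mathrm{C}\setminus\{0\}$ and let $\Gamma=[x_0,x_1]\times[y_0,y_1]\subset\mathrm{R}^2$ with $x_0<x_1$, $y_0<y_1$, such that $\mathrm{val}_z(F/G)$ is even for every vertex $z$ of $\Gamma$. Then $\mathrm{w}(F/G\mid\partial\Gamma)=\mathrm{w}(\gamma F/G\mid\partial\Gamma)$.
   Context: Points $(x,y)\in\mathrm{R}^2$ are identified with $x+iy\in\mathrm{C}$. For nonzero $P\in\mathrm{R}[X]$ and $x\in\mathrm{R}$ write uniquely $P=(X-x)^{\mathrm{mult}_x(P)}P_x$ with $P_x(x)\neq0$; for $P,Q\neq0$ set $\mathrm{val}_x(P/Q)=\mathrm{mult}_x(P)-\mathrm{mult}_x(Q)$. For $P,Q\in\mathrm{R}[X]$, $x\in\mathrm{R}$: $\mathrm{Ind}^+_x(P,Q)=\tfrac12\,\mathrm{sign}(P_x(x)Q_x(x))$ and $\mathrm{Ind}^-_x(P,Q)=\tfrac12(-1)^{\mathrm{val}_x(P/Q)}\mathrm{sign}(P_x(x)Q_x(x))$ if $P\ne0$, $Q\neq0$ and $\mathrm{val}_x(P/Q)<0$, and both are $0$ otherwise; $\mathrm{Ind}_x=\mathrm{Ind}^+_x-\mathrm{Ind}^-_x$. For $a<b$, $\mathrm{Ind}_a^b(P,Q)=\mathrm{Ind}_a^+(P,Q)+\sum_{x\in(a,b)}\mathrm{Ind}_x(P,Q)-\mathrm{Ind}_b^-(P,Q)$;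 $\mathrm{Ind}_a^b=-\mathrm{Ind}_b^a$ if $b<a$, and $\mathrm{Ind}_a^a=0$. For $F\in\mathrm{C}[X,Y]$ let $F_{\rm re},F_{\rm im}\in\mathrm{R}[X,Y]$ with $F=F_{\rm re}+iF_{\rm im}$, and $\overline F=F_{\rm re}-iF_{\rm im}$. Define $\mathrm{w}(F\mid\partial\Gamma)=\tfrac12\big(\mathrm{Ind}_{x_0}^{x_1}(F_{\rm re}(T,y_0),F_{\rm im}(T,y_0))+\mathrm{Ind}_{y_0}^{y_1}(F_{\rm re}(x_1,T),F_{\rm im}(x_1,T))+\mathrm{Ind}_{x_1}^{x_0}(F_{\rm re}(T,y_1),F_{\rm im}(T,y_1))+\mathrm{Ind}_{y_1}^{y_0}(F_{\rm re}(x_0,T),F_{\rm im}(x_0,T))\big)$. $\mathrm{C}[Z]\subset\mathrm{C}[X,Y]$ via $Z=X+iY$. For $F,G\in\mathrm{C}[X,Y]$, $G\neq0$, $\mathrm{w}(F/G\mid\partial\Gamma):=\mathrm{w}(F\overline G\mid\partial\Gamma)$ (independent of the representation). For nonzero $F\in\mathrm{C}[Z]$, $z\in\mathrm{C}$ write $F=(Z-z)^{\mathrm{mult}_z(F)}F_z$ with $F_z(z)\ne0$, and $\mathrm{val}_z(F/G)=\mathrm{mult}_z(F)-\mathrm{mult}_z(G)$ for $F,G\ne0$. *)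

theory Defs
  imports "HOL-Computational_Algebra.Polynomial"
begin

text \<open>An ordered field in which every non-negative element is a square and every
(monic, w.l.o.g.) polynomial of odd degree has a root (the standard characterisation of real closed
fields).\<close>

class real_closed_field = linordered_field +
  assumes rcf_sqrt: "0 \<le> x \<Longrightarrow> \<exists>y. y * y = x"
  assumes rcf_odd_root: "odd n \<Longrightarrow> \<exists>x. x ^ n + (\<Sum>i<n. c i * x ^ i) = 0"

datatype 'a cpx = Cpx (Re: 'a) (Im: 'a)

instantiation cpx :: (comm_ring_1) comm_ring_1
begin
definition "0 = Cpx 0 0"
definition "1 = Cpx 1 0"
definition "z + w = Cpx (Re z + Re w) (Im z + Im w)"
definition "z - w = Cpx (Re z - Re w) (Im z - Im w)"
definition "- z = Cpx (- Re z) (- Im z)"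
definition "z * w = Cpx (Re z * Re w - Im z * Im w) (Re z * Im w + Im z * Re w)"
instance
  by intro_classes
     (auto simp: zero_cpx_def one_cpx_def plus_cpx_def minus_cpx_def uminus_cpx_def
                 times_cpx_def algebra_simps cpx.expand)
end

lemma cpx_no_zero_divisors:
  fixes z w :: "'a::linordered_idom cpx"
  assumes "z * w = 0" shows "z = 0 \<or> w = 0"
proof -
  obtain a b where z: "z = Cpx a b" by (cases z)
  obtain c d where w: "w = Cpx c d" by (cases w)
  from assms have e1: "a*c - b*d = 0" and e2: "a*d + b*c = 0"
    by (auto simp: z w times_cpx_def zero_cpx_def)
  have "(a*a + b*b) * (c*c + d*d) = (a*c - b*d)*(a*c - b*d) + (a*d + b*c)*(a*d + b*c)"
    by (simp add: algebra_simps)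
  also have "\<dots> = 0" using e1 e2 by simp
  finally have "a*a + b*b = 0 \<or> c*c + d*d = 0" by simp
  then show ?thesis
    by (auto simp: z w zero_cpx_def add_nonneg_eq_0_iff)
qed

instance cpx :: (linordered_idom) idom
  by intro_classes (use cpx_no_zero_divisors in blast)

definition cnj :: "'a::comm_ring_1 cpx \<Rightarrow> 'a cpx" where
  "cnj z = Cpx (Re z) (- Im z)"

definition cofactor :: "'a::field poly \<Rightarrow> 'a \<Rightarrow> 'a poly" where
  "cofactor P x = P div [:- x, 1:] ^ order x P"

definition val_at :: "'a::idom poly \<Rightarrow> 'a poly \<Rightarrow> 'a \<Rightarrow> int" where
  "val_at P Q x = int (order x P) - int (order x Q)"

definition ind_plus :: "'a::linordered_field poly \<Rightarrow> 'a poly \<Rightarrow> 'a \<Rightarrow> 'a" where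
  "ind_plus P Q x =
     (if P \<noteq> 0 \<and> Q \<noteq> 0 \<and> val_at P Q x < 0
      then sgn (poly (cofactor P x) x * poly (cofactor Q x) x) / 2 else 0)"

definition ind_minus :: "'a::linordered_field poly \<Rightarrow> 'a poly \<Rightarrow> 'a \<Rightarrow> 'a" where
  "ind_minus P Q x =
     (if P \<noteq> 0 \<and> Q \<noteq> 0 \<and> val_at P Q x < 0
      then (-1) powi (val_at P Q x) * sgn (poly (cofactor P x) x * poly (cofactor Q x) x) / 2
      else 0)"

definition ind_at :: "'a::linordered_field poly \<Rightarrow> 'a poly \<Rightarrow> 'a \<Rightarrow> 'a" where
  "ind_at P Q x = ind_plus P Q x - ind_minus P Q x"

definition ind_lt :: "'a::linordered_field \<Rightarrow> 'a \<Rightarrow> 'a poly \<Rightarrow> 'a poly \<Rightarrow> 'a" where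
  "ind_lt a b P Q = ind_plus P Q a
      + (\<Sum>x\<in>{x. a < x \<and> x < b \<and> ind_at P Q x \<noteq> 0}. ind_at P Q x)
      - ind_minus P Q b"

definition cind :: "'a::linordered_field \<Rightarrow> 'a \<Rightarrow> 'a poly \<Rightarrow> 'a poly \<Rightarrow> 'a" where
  "cind a b P Q = (if a < b then ind_lt a b P Q else if b < a then - ind_lt b a P Q else 0)"

text \<open>Restriction of \<open>F \<in> C[Z] \<subseteq> C[X,Y]\<close> (with \<open>Z = X + iY\<close>) to the horizontal line
\<open>Y = y\<close> resp. the vertical line \<open>X = x\<close>, as a polynomial in \<open>T\<close> over \<open>C\<close>.\<close>
definition restr_h :: "'a::comm_ring_1 cpx poly \<Rightarrow> 'a \<Rightarrow> 'a cpx poly" where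
  "restr_h F y = pcompose F [:Cpx 0 y, 1:]"

definition restr_v :: "'a::comm_ring_1 cpx poly \<Rightarrow> 'a \<Rightarrow> 'a cpx poly" where
  "restr_v F x = pcompose F [:Cpx x 0, Cpx 0 1:]"

definition re_poly :: "'a::comm_ring_1 cpx poly \<Rightarrow> 'a poly" where
  "re_poly H = map_poly Re H"
definition im_poly :: "'a::comm_ring_1 cpx poly \<Rightarrow> 'a poly" where
  "im_poly H = map_poly Im H"

text \<open>On a line with real parameter \<open>T\<close>, the restriction of \<open>\<overline>G\<close> is obtained by conjugating
the coefficients of the restriction of \<open>G\<close>; hence the restriction of \<open>F \<overline>G\<close> is
\<open>edge F G\<close> below.\<close>
definition edge_prod :: "'a::comm_ring_1 cpx poly \<Rightarrow> 'a cpx poly \<Rightarrow> 'a cpx poly" where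
  "edge_prod A B = A * map_poly cnj B"

text \<open>\<open>w(F/G | \<partial>\<Gamma>) := w(F \<overline>G | \<partial>\<Gamma>)\<close> for \<open>\<Gamma> = [x0,x1] \<times> [y0,y1]\<close>.\<close>
definition wind_frac ::
  "'a::linordered_field cpx poly \<Rightarrow> 'a cpx poly \<Rightarrow> 'a \<Rightarrow> 'a \<Rightarrow> 'a \<Rightarrow> 'a \<Rightarrow> 'a" where
  "wind_frac F G x0 x1 y0 y1 =
    (let H0 = edge_prod (restr_h F y0) (restr_h G y0);
         V1 = edge_prod (restr_v F x1) (restr_v G x1);
         H1 = edge_prod (restr_h F y1) (restr_h G y1);
         V0 = edge_prod (restr_v F x0) (restr_v G x0)
     in (cind x0 x1 (re_poly H0) (im_poly H0)
       + cind y0 y1 (re_poly V1) (im_poly V1)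
       + cind x1 x0 (re_poly H1) (im_poly H1)
       + cind y1 y0 (re_poly V0) (im_poly V0)) / 2)"

definition cval :: "'a::linordered_idom cpx poly \<Rightarrow> 'a cpx poly \<Rightarrow> 'a cpx \<Rightarrow> int" where
  "cval F G z = int (order z F) - int (order z G)"

end

theory Submission
  imports Defs "HOL-Algebra.Algebraic_Closure_Type" "Jordan_Normal_Form.Char_Poly"
begin

hide_const (open) UnivPoly.coeff UnivPoly.monom UnivPoly.deg Polynomials.degree Polynomials.lead_coeff Module.module.smult Coset.order Determinant.cofactor

instantiation cpx :: (linordered_field) field
begin
definition "inverse z = Cpx (Re z / (Re z * Re z + Im z * Im z)) (- Im z / (Re z * Re z + Im z * Im z))"
definition "z div w = z * inverse (w :: 'a cpx)"
instance
proof
  fix z :: "'a cpx"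
  assume "z \<noteq> 0"
  then have "Re z * Re z + Im z * Im z \<noteq> 0"
    by (cases z) (auto simp: zero_cpx_def add_nonneg_eq_0_iff)
  then show "inverse z * z = 1"
  proof (cases z)
    case (Cpx a b)
    with \<open>Re z * Re z + Im z * Im z \<noteq> 0\<close> have d: "a * a + b * b \<noteq> 0" by simp
    have "a / (a * a + b * b) * a - - b / (a * a + b * b) * b = a * a / (a * a + b * b) + b * b / (a * a + b * b)"
      by simp
    also have "\<dots> = (a * a + b * b) / (a * a + b * b)"
      by (rule add_divide_distrib[symmetric])
    also have "\<dots> = 1" using d by simp
    finally have 1: "a / (a * a + b * b) * a - - b / (a * a + b * b) * b = 1" .
    have "a / (a * a + b * b) * b + - b / (a * a + b * b) * a = 0"
      by (simp add: times_divide_eq_left mult.commute)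
    with 1 show ?thesis using Cpx
      by (simp add: inverse_cpx_def times_cpx_def one_cpx_def)
  qed
next
  show "inverse (0::'a cpx) = 0" by (simp add: inverse_cpx_def zero_cpx_def)
qed (simp add: divide_cpx_def)
end


lemma cpx_eq_iff: "z = w \<longleftrightarrow> Re z = Re w \<and> Im z = Im w"
  by (cases z, cases w) auto

lemma Re_0 [simp]: "Re 0 = 0" and Im_0 [simp]: "Im 0 = 0"
  by (simp_all add: zero_cpx_def)
lemma Re_1 [simp]: "Re 1 = 1" and Im_1 [simp]: "Im 1 = 0"
  by (simp_all add: one_cpx_def)
lemma Re_add [simp]: "Re (z + w) = Re z + Re w" and Im_add [simp]: "Im (z + w) = Im z + Im w"
  by (simp_all add: plus_cpx_def)
lemma Re_diff [simp]: "Re (z - w) = Re z - Re w" and Im_diff [simp]: "Im (z - w) = Im z - Im w"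
  by (simp_all add: minus_cpx_def)
lemma Re_uminus [simp]: "Re (- z) = - Re z" and Im_uminus [simp]: "Im (- z) = - Im z"
  by (simp_all add: uminus_cpx_def)
lemma Re_mult [simp]: "Re (z * w) = Re z * Re w - Im z * Im w"
  and Im_mult [simp]: "Im (z * w) = Re z * Im w + Im z * Re w"
  by (simp_all add: times_cpx_def)

definition cplx :: "'a::comm_ring_1 \<Rightarrow> 'a cpx" where
  "cplx a = Cpx a 0"

lemma Re_cplx [simp]: "Re (cplx a) = a" and Im_cplx [simp]: "Im (cplx a) = 0"
  by (simp_all add: cplx_def)

interpretation cplx_hom: field_hom "cplx :: 'a::linordered_field \<Rightarrow> 'a cpx"
  by unfold_locales (simp_all add: cpx_eq_iff)

lemma cplx_inj [simp]: "cplx a = cplx b \<longleftrightarrow> a = b"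
  by (simp add: cplx_def)

interpretation to_ac_hom: field_hom "to_ac :: 'a::field \<Rightarrow> 'a alg_closure"
  by unfold_locales simp_all

definition eR :: "'a::linordered_field \<Rightarrow> 'a cpx alg_closure" where
  "eR a = to_ac (cplx a)"

interpretation eR_hom: field_hom "eR :: 'a::linordered_field \<Rightarrow> 'a cpx alg_closure"
  by unfold_locales (simp_all add: eR_def cplx_hom.hom_add cplx_hom.hom_mult)

lemma eR_inj [simp]: "eR a = eR b \<longleftrightarrow> a = b"
  by (simp add: eR_def)

lemma eR_0_iff [simp]: "eR a = 0 \<longleftrightarrow> a = 0"
  using eR_inj[of a 0] by simp

interpretation eR_poly: map_poly_idom_hom "eR :: 'a::linordered_field \<Rightarrow> 'a cpx alg_closure" ..
interpretation to_ac_poly: map_poly_idom_hom "to_ac :: 'a::field \<Rightarrow> 'a alg_closure" ..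
interpretation cplx_poly: map_poly_idom_hom "cplx :: 'a::linordered_field \<Rightarrow> 'a cpx" ..

lemma map_poly_eR: "map_poly eR p = map_poly to_ac (map_poly cplx p)"
  unfolding eR_def[abs_def] by (simp add: map_poly_map_poly o_def)


interpretation eR_ip: map_poly_inj_idom_hom "eR :: 'a::linordered_field \<Rightarrow> 'a cpx alg_closure" ..
interpretation to_ac_ip: map_poly_inj_idom_hom "to_ac :: 'a::field \<Rightarrow> 'a alg_closure" ..

lemma range_eR_sum:
  assumes "\<forall>i\<in>A. f i \<in> range (eR :: 'a::linordered_field \<Rightarrow> _)"
  shows "sum f A \<in> range eR"
proof -
  have "sum f A = sum (\<lambda>i. eR (inv_into UNIV eR (f i))) A"
    using assms by (intro sum.cong) (auto simp: f_inv_into_f)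
  also have "\<dots> = eR (sum (\<lambda>i. inv_into UNIV eR (f i)) A)" by (simp add: eR_hom.hom_sum)
  finally show ?thesis by simp
qed

lemma range_eR_poly:
  fixes P :: "'a::linordered_field cpx alg_closure poly"
  assumes "\<forall>i. coeff P i \<in> range eR"
  shows "P \<in> range (map_poly eR)"
proof -
  have "map_poly eR (map_poly (inv_into UNIV eR) P) = P"
  proof (rule poly_eqI)
    fix i
    have "inv_into UNIV eR (eR (0::'a)) = (0::'a)"
      by (rule inv_into_f_f) (auto intro: injI)
    then have "inv_into UNIV eR (0::'a cpx alg_closure) = (0::'a)" by simp
    then have "coeff (map_poly (inv_into UNIV eR) P) i = inv_into UNIV eR (coeff P i)"
      by (simp add: coeff_map_poly)
    then show "coeff (map_poly eR (map_poly (inv_into UNIV eR) P)) i = coeff P i"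
      using assms by (simp add: coeff_map_poly f_inv_into_f)
  qed
  then show ?thesis by (metis rangeI)
qed

lemma coeff_range_eR:
  assumes "P \<in> range (map_poly (eR :: 'a::linordered_field \<Rightarrow> _))"
  shows "coeff P i \<in> range eR"
  using assms by (auto simp: coeff_map_poly)

lemma interp_range:
  fixes P :: "'a::linordered_field cpx alg_closure poly"
  assumes "infinite S" "\<forall>x\<in>S. poly P (eR x) \<in> range eR"
  shows "P \<in> range (map_poly eR)"
  using assms
proof (induction "degree P" arbitrary: P S rule: less_induct)
  case less
  from less.prems obtain a where aS: "a \<in> S" by (metis finite.emptyI ex_in_conv)
  with less.prems obtain b0 where b0: "poly P (eR a) = eR b0" by blast
  show ?case
  proof (cases "degree P = 0")
    case True
    then obtain c where P: "P = [:c:]" by (metis degree_eq_zeroE)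
    with b0 have "c = eR b0" by simp
    with P have "P = map_poly eR [:b0:]" by (simp add: eR_hom.map_poly_pCons_hom)
    then show ?thesis by blast
  next
    case False
    have "poly (P - [:eR b0:]) (eR a) = 0" using b0 by simp
    then obtain P1 where P1: "P - [:eR b0:] = [:- eR a, 1:] * P1"
      by (metis dvdE poly_eq_0_iff_dvd)
    have deq: "degree (P - [:eR b0:]) = degree P"
      using False by (metis add_0 degree_add_eq_left degree_pCons_0 diff_conv_add_uminus
          neq0_conv degree_minus pCons_0_0 minus_pCons uminus_poly.abs_eq)
    moreover have "P1 \<noteq> 0" using P1 False by (metis add_0 degree_0 diff_add_cancel
          degree_pCons_0 mult_zero_right)
    ultimately have P10: "P1 \<noteq> 0" by simp
    from deq P1 have "degree P = degree ([:- eR a, 1:] * P1)" by metis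
    also have "\<dots> = Suc (degree P1)" using P10 by (subst degree_mult_eq) auto
    finally have dP1: "degree P1 < degree P" by simp
    have "\<forall>x\<in>S - {a}. poly P1 (eR x) \<in> range eR"
    proof
      fix x assume x: "x \<in> S - {a}"
      with less.prems obtain y where y: "poly P (eR x) = eR y" by blast
      have "poly (P - [:eR b0:]) (eR x) = poly ([:- eR a, 1:] * P1) (eR x)"
        by (simp only: P1)
      then have "eR y - eR b0 = (eR x - eR a) * poly P1 (eR x)" using y
        by (simp only: poly_diff poly_mult poly_pCons poly_0) (simp add: algebra_simps)
      moreover have "eR x - eR a \<noteq> 0" using x by simp
      ultimately have "poly P1 (eR x) = (eR y - eR b0) / (eR x - eR a)"
        by (simp add: field_simps)
      also have "\<dots> = eR ((y - b0) / (x - a))" by (simp add: hom_distribs)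
      finally show "poly P1 (eR x) \<in> range eR" by simp
    qed
    moreover have "infinite (S - {a})" using less.prems by simp
    ultimately obtain p1 where p1: "P1 = map_poly eR p1"
      using less.hyps[OF dP1] by blast
    have "P = [:eR b0:] + [:- eR a, 1:] * P1" using P1 by (simp add: algebra_simps)
    also have "\<dots> = map_poly eR ([:b0:] + [:- a, 1:] * p1)"
      by (simp add: p1 hom_distribs)
    finally show ?thesis by blast
  qed
qed

lemma prod_mset_swap:
  "(\<Prod>x\<in>#A. \<Prod>y\<in>#B. f x y) = (\<Prod>y\<in>#B. \<Prod>x\<in>#A. (f x y :: 'b::comm_monoid_mult))"
  by (induction A) (simp_all add: prod_mset.distrib)

lemma prod_mset_const: "(\<Prod>x\<in>#A. (k::'b::comm_monoid_mult)) = k ^ size A"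
  by (induction A) simp_all

lemma prod_mset_neg_diff:
  "(\<Prod>x\<in>#A. (y - x)) = (-1) ^ size A * (\<Prod>x\<in>#A. (x - (y::'b::comm_ring_1)))"
  by (induction A) (simp_all add: algebra_simps)

lemma degree_linear_prod:
  "degree (\<Prod>x\<in>#M. [:- x, 1:]) = size (M :: 'b::idom multiset)"
proof (induction M)
  case (add x M)
  have "(\<Prod>x\<in>#M. [:- x, 1:]) \<noteq> 0" by (auto simp: prod_mset_zero_iff)
  then show ?case using add by (simp add: degree_mult_eq del: mult_pCons_left)
qed simp

lemma poly_linear_prod:
  "poly (\<Prod>x\<in>#M. [:- x, 1:]) y = (\<Prod>x\<in>#M. (y - (x::'b::comm_ring_1)))"
proof (induction M)
  case (add x M)
  have "poly (\<Prod>x\<in>#add_mset x M. [:- x, 1:]) y = poly [:- x, 1:] y * poly (\<Prod>x\<in>#M. [:- x, 1:]) y"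
    by (simp only: image_mset_add_mset prod_mset.add_mset poly_mult)
  also have "poly [:- x, 1:] y = y - x" by (simp add: algebra_simps)
  finally show ?case using add by simp
qed simp

lemma N_range:
  fixes p a :: "'a::linordered_field poly" and M :: "'a cpx alg_closure multiset"
  assumes "p \<noteq> 0" "map_poly eR p = smult (eR (lead_coeff p)) (\<Prod>x\<in>#M. [:-x,1:])"
  shows "(\<Prod>x\<in>#M. poly (map_poly eR a) x) \<in> range eR"
  using assms
proof (induction "2*(degree p + degree a) + (if degree a < degree p then 1 else 0)"
    arbitrary: p a M rule: less_induct)
  case less
  have lp: "lead_coeff p \<noteq> 0" using less.prems by simp
  have sM: "size M = degree p"
  proof -
    have "degree p = degree (map_poly eR p)" by simp
    also have "\<dots> = size M" using less.prems(2) lp by (simp add: degree_linear_prod)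
    finally show ?thesis by simp
  qed
  have rootM: "poly (map_poly eR p) x = 0" if "x \<in># M" for x
  proof -
    from that obtain M' where "M = add_mset x M'" by (metis multi_member_split)
    then show ?thesis using less.prems(2) by (simp add: poly_linear_prod)
  qed
  show ?case
  proof (cases "M = {#}")
    case True
    then show ?thesis by simp
  next
    case Mne: False
    then have dp: "degree p > 0" using sM by (metis size_eq_0_iff_empty neq0_conv)
    show ?thesis
    proof (cases "a = 0")
      case True
      from Mne obtain x M' where "M = add_mset x M'" by (metis multiset_cases)
      then show ?thesis using True by (simp add: image_iff)
    next
      case a0: False
      show ?thesis
      proof (cases "degree a = 0")
        case True
        then obtain c where a: "a = [:c:]" by (metis degree_eq_zeroE)
        have "(\<Prod>x\<in>#M. poly (map_poly eR a) x) = eR c ^ size M"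
          by (simp add: a eR_hom.map_poly_pCons_hom prod_mset_const)
        also have "\<dots> = eR (c ^ size M)" by (simp add: hom_distribs)
        finally show ?thesis by simp
      next
        case da: False
        show ?thesis
        proof (cases "degree a < degree p")
          case False
          define b where "b = a mod p"
          have eq: "poly (map_poly eR a) x = poly (map_poly eR b) x" if "x \<in># M" for x
          proof -
            have "map_poly eR a = map_poly eR (p * (a div p) + b)" by (simp add: b_def)
            also have "\<dots> = map_poly eR p * map_poly eR (a div p) + map_poly eR b"
              by (simp only: hom_distribs)
            finally have "map_poly eR a = map_poly eR p * map_poly eR (a div p) + map_poly eR b" .
            then show ?thesis using rootM[OF that] by simp
          qed
          have db: "degree b < degree p"
            using dp unfolding b_def
            by (metis degree_0 degree_mod_less neq0_conv)
          have "(\<Prod>x\<in>#M. poly (map_poly eR a) x) = (\<Prod>x\<in>#M. poly (map_poly eR b) x)"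
            using eq by (intro arg_cong[where f=prod_mset] image_mset_cong) auto
          moreover have "(\<Prod>x\<in>#M. poly (map_poly eR b) x) \<in> range eR"
            by (rule less.hyps[OF _ less.prems]) (use db False in auto)
          ultimately show ?thesis by simp
        next
          case True
          have "map_poly eR a \<noteq> 0" using a0 by simp
          from alg_closed_imp_factorization[OF this] obtain M' where
            M': "size M' = degree a"
              "map_poly eR a = smult (eR (lead_coeff a)) (\<Prod>x\<in>#M'. [:-x,1:])"
            by auto
          have "(\<Prod>y\<in>#M'. poly (map_poly eR p) y) \<in> range eR"
            by (rule less.hyps[OF _ a0 M'(2)]) (use True in auto)
          then obtain w where w: "(\<Prod>y\<in>#M'. poly (map_poly eR p) y) = eR w" by blast
          define Z where "Z = (\<Prod>x\<in>#M. \<Prod>y\<in>#M'. (x - y))"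
          have "(\<Prod>y\<in>#M'. poly (map_poly eR p) y)
              = (\<Prod>y\<in>#M'. eR (lead_coeff p) * (\<Prod>x\<in>#M. (y - x)))"
            using less.prems(2) by (simp add: poly_linear_prod)
          also have "\<dots> = eR (lead_coeff p) ^ size M' *
              (\<Prod>y\<in>#M'. (-1) ^ size M * (\<Prod>x\<in>#M. (x - y)))"
            by (simp add: prod_mset.distrib prod_mset_const prod_mset_neg_diff)
          also have "\<dots> = eR (lead_coeff p) ^ size M' * ((-1) ^ (size M * size M') * Z)"
            by (simp add: prod_mset.distrib prod_mset_const Z_def prod_mset_swap[of _ M]
                power_mult)
          finally have Zw: "eR (lead_coeff p) ^ size M' * ((-1) ^ (size M * size M') * Z) = eR w"
            using w by simp
          have "(\<Prod>x\<in>#M. poly (map_poly eR a) x) = (\<Prod>x\<in>#M. eR (lead_coeff a) * (\<Prod>y\<in>#M'. (x - y)))"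
            using M'(2) by (simp add: poly_linear_prod)
          also have "\<dots> = eR (lead_coeff a) ^ size M * Z"
            by (simp add: prod_mset.distrib prod_mset_const Z_def)
          also have "\<dots> = eR (lead_coeff a ^ size M * (w / (lead_coeff p ^ size M' * (-1) ^ (size M * size M'))))"
          proof -
            have "Z = eR w / (eR (lead_coeff p) ^ size M' * (-1) ^ (size M * size M'))"
              using Zw lp by (simp add: field_simps)
            then show ?thesis by (simp add: hom_distribs)
          qed
          finally show ?thesis by simp
        qed
      qed
    qed
  qed
qed

lemma two_L_ne0: "(2::'a::linordered_field cpx alg_closure) \<noteq> 0"
proof -
  have "eR (2::'a) \<noteq> 0" by simp
  then show ?thesis by (simp add: eR_hom.hom_numeral)
qed

lemma sq_range:
  fixes Q :: "'a::linordered_field cpx alg_closure poly"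
  assumes lc: "lead_coeff Q = 1" and QQ: "Q * Q \<in> range (map_poly eR)"
  shows "Q \<in> range (map_poly eR)"
proof -
  define m where "m = degree Q"
  have cQQ: "coeff (Q * Q) j \<in> range eR" for j
    using QQ by (rule coeff_range_eR)
  have key: "k \<le> m \<longrightarrow> coeff Q (m - k) \<in> range eR" for k
  proof (induction k rule: less_induct)
    case (less k)
    show ?case
    proof
      assume km: "k \<le> m"
      show "coeff Q (m - k) \<in> range eR"
      proof (cases "k = 0")
        case True
        then have "coeff Q (m - k) = eR 1" using lc by (simp add: m_def)
        then show ?thesis by blast
      next
        case False
        define f where "f i = coeff Q i * coeff Q (2 * m - k - i)" for i
        have "coeff (Q * Q) (2 * m - k) = (\<Sum>i\<le>2 * m - k. f i)"
          by (simp add: coeff_mult f_def)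
        also have "\<dots> = (\<Sum>i\<in>{m - k..m}. f i)"
        proof (rule sum.mono_neutral_right)
          show "{m - k..m} \<subseteq> {..2 * m - k}" using km by auto
          show "\<forall>i\<in>{..2 * m - k} - {m - k..m}. f i = 0"
          proof
            fix i assume i: "i \<in> {..2 * m - k} - {m - k..m}"
            show "f i = 0"
            proof (cases "i > m")
              case True
              then show ?thesis by (simp add: f_def coeff_eq_0 m_def)
            next
              case False
              with i km have "2 * m - k - i > m" by auto
              then show ?thesis by (simp add: f_def coeff_eq_0 m_def)
            qed
          qed
        qed simp
        also have "{m - k..m} = insert (m - k) (insert m {m - k<..<m})"
          using km False by auto
        also have "(\<Sum>i\<in>insert (m - k) (insert m {m - k<..<m}). f i)
            = f (m - k) + (f m + (\<Sum>i\<in>{m - k<..<m}. f i))"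
          using km False by (subst sum.insert; auto)+
        also have "f (m - k) = coeff Q (m - k)"
          using km lc by (simp add: f_def m_def)
        also have "f m = coeff Q (m - k)"
          using km lc by (simp add: f_def m_def)
        finally have eq: "coeff (Q * Q) (2 * m - k) =
            2 * coeff Q (m - k) + (\<Sum>i\<in>{m - k<..<m}. f i)" by simp
        have "(\<Sum>i\<in>{m - k<..<m}. f i) \<in> range eR"
        proof (rule range_eR_sum, rule ballI)
          fix i assume i: "i \<in> {m - k<..<m}"
          have "coeff Q i \<in> range eR"
          proof -
            have "m - i < k" "m - i \<le> m" using i km by auto
            then show ?thesis using less.IH[of "m - i"] i by simp
          qed
          moreover have "coeff Q (2 * m - k - i) \<in> range eR"
          proof -
            have "2 * m - k - i = m - (i + k - m)" using i km by auto
            moreover have "i + k - m < k" "i + k - m \<le> m" using i km by auto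
            ultimately show ?thesis using less.IH[of "i + k - m"] by simp
          qed
          ultimately show "f i \<in> range eR" unfolding f_def
            by (metis (no_types, lifting) eR_hom.hom_mult image_iff rangeI)
        qed
        then obtain v where v: "(\<Sum>i\<in>{m - k<..<m}. f i) = eR v" by blast
        obtain u where u: "coeff (Q * Q) (2 * m - k) = eR u" using cQQ by blast
        have "2 * coeff Q (m - k) = eR u - eR v" using eq u v by simp
        then have "coeff Q (m - k) = (eR u - eR v) / 2"
          using two_L_ne0 by (metis nonzero_mult_div_cancel_left)
        also have "\<dots> = eR ((u - v) / 2)" by (simp add: hom_distribs)
        finally show ?thesis by (metis rangeI)
      qed
    qed
  qed
  have "\<forall>i. coeff Q i \<in> range eR"
  proof
    fix i
    show "coeff Q i \<in> range eR"
    proof (cases "i \<le> m")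
      case True
      then show ?thesis using key[of "m - i"] by simp
    next
      case False
      then have "coeff Q i = eR 0" by (simp add: coeff_eq_0 m_def)
      then show ?thesis by blast
    qed
  qed
  then show ?thesis by (rule range_eR_poly)
qed


definition rsqrt :: "'a::real_closed_field \<Rightarrow> 'a" where
  "rsqrt x = (SOME y. 0 \<le> y \<and> y * y = x)"

lemma rsqrt: assumes "0 \<le> x" shows "0 \<le> rsqrt x" "rsqrt x * rsqrt x = x"
proof -
  obtain y where "y * y = x" using rcf_sqrt[OF assms] by blast
  then have "0 \<le> \<bar>y\<bar> \<and> \<bar>y\<bar> * \<bar>y\<bar> = x" by (simp add: abs_mult_self_eq)
  then have "0 \<le> rsqrt x \<and> rsqrt x * rsqrt x = x"
    unfolding rsqrt_def by (rule someI)
  then show "0 \<le> rsqrt x" "rsqrt x * rsqrt x = x" by auto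
qed

lemma sq_unique:
  fixes a b :: "'a::linordered_idom"
  assumes "0 \<le> a" "0 \<le> b" "a * a = b * b" shows "a = b"
proof -
  have "(a - b) * (a + b) = 0" using assms(3) by (simp add: algebra_simps)
  then have "a = b \<or> a + b = 0" by simp
  then show ?thesis using assms by auto
qed

lemma cpx_sqrt: "\<exists>u::'a::real_closed_field cpx. u * u = s"
proof -
  define a where "a = Re s"
  define b where "b = Im s"
  define r where "r = rsqrt (a * a + b * b)"
  have r0: "0 \<le> r" and rr: "r * r = a * a + b * b"
    using rsqrt[of "a * a + b * b"] by (auto simp: r_def)
  have "\<bar>a\<bar> * \<bar>a\<bar> \<le> r * r" using rr by (simp add: abs_mult_self_eq)
  then have ra: "\<bar>a\<bar> \<le> r" using r0 by (meson abs_ge_zero mult_mono not_le less_le_trans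
        mult_strict_mono)
  define x where "x = rsqrt ((r + a) / 2)"
  define y0 where "y0 = rsqrt ((r - a) / 2)"
  have x0: "0 \<le> x" and xx: "x * x = (r + a) / 2"
    using rsqrt[of "(r + a) / 2"] ra by (auto simp: x_def)
  have y00: "0 \<le> y0" and yy: "y0 * y0 = (r - a) / 2"
    using rsqrt[of "(r - a) / 2"] ra by (auto simp: y0_def)
  have "(2 * x * y0) * (2 * x * y0) = 4 * (x * x) * (y0 * y0)" by (simp add: algebra_simps)
  also have "\<dots> = (r + a) * (r - a)" by (simp add: xx yy)
  also have "\<dots> = \<bar>b\<bar> * \<bar>b\<bar>" using rr by (simp add: algebra_simps abs_mult_self_eq)
  finally have xyb: "2 * x * y0 = \<bar>b\<bar>"
    by (rule sq_unique[rotated 2]) (use x0 y00 in auto)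
  define y where "y = (if b < 0 then - y0 else y0)"
  have "Cpx x y * Cpx x y = s"
  proof (cases s)
    case (Cpx a' b')
    have "x * x - y * y = a" by (simp add: y_def xx yy field_simps)
    moreover have "x * y + y * x = b" using xyb by (auto simp: y_def algebra_simps)
    ultimately show ?thesis by (simp add: cpx_eq_iff a_def b_def)
  qed
  then show ?thesis by blast
qed

lemma odd_real_root:
  fixes p :: "'a::real_closed_field poly"
  assumes "odd (degree p)"
  shows "\<exists>x. poly p x = 0"
proof -
  define n where "n = degree p"
  have p0: "p \<noteq> 0" using assms by auto
  then have lc: "lead_coeff p \<noteq> 0" by simp
  obtain x where x: "x ^ n + (\<Sum>i<n. (coeff p i / lead_coeff p) * x ^ i) = 0"
    using rcf_odd_root[of n "\<lambda>i. coeff p i / lead_coeff p"] assms n_def by blast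
  have "poly p x = (\<Sum>i<Suc n. coeff p i * x ^ i)"
    by (simp add: poly_altdef n_def lessThan_Suc_atMost)
  also have "\<dots> = (\<Sum>i<n. coeff p i * x ^ i) + lead_coeff p * x ^ n"
    by (simp add: n_def)
  also have "\<dots> = lead_coeff p * (x ^ n + (\<Sum>i<n. (coeff p i / lead_coeff p) * x ^ i))"
    using lc by (simp add: algebra_simps sum_distrib_left)
  also have "\<dots> = 0" using x by simp
  finally show ?thesis by blast
qed


lemma prod_mset_mset_nth:
  "(\<Prod>x\<in>#mset xs. f x) = (\<Prod>i<length xs. (f (xs ! i) :: 'b::comm_monoid_mult))"
proof (induction xs)
  case (Cons a xs)
  then show ?case by (simp del: prod.lessThan_Suc add: prod.lessThan_Suc_shift)
qed simp

lemma card_pairs: "2 * card {(i, j). i < j \<and> j < (n::nat)} = n * (n - 1)"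
proof (induction n)
  case 0
  then show ?case by simp
next
  case (Suc n)
  have eq: "{(i, j). i < j \<and> j < Suc n} = {(i, j). i < j \<and> j < n} \<union> (\<lambda>i. (i, n)) ` {..<n}"
    by auto
  have fin: "finite {(i, j). i < j \<and> j < (n::nat)}"
    by (rule finite_subset[of _ "{..<n} \<times> {..<n}"]) auto
  have "card ({(i, j). i < j \<and> j < n} \<union> (\<lambda>i. (i, n)) ` {..<n}) =
      card {(i, j). i < j \<and> j < n} + card ((\<lambda>i. (i, n)) ` {..<n})"
    by (rule card_Un_disjoint) (use fin in auto)
  also have "card ((\<lambda>i. (i, n)) ` {..<n}) = n"
    by (subst card_image) (auto intro: inj_onI)
  finally have "2 * card {(i, j). i < j \<and> j < Suc n} = n * (n - 1) + 2 * n"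
    using Suc.IH eq by simp
  then show ?case by (cases n) (simp_all add: algebra_simps)
qed




lemma laplace_step:
  fixes p :: "'a::real_closed_field poly"
  assumes n2: "degree p \<ge> 2"
    and IH: "\<And>q::'a poly. degree q = degree p * (degree p - 1) div 2 \<Longrightarrow>
               \<exists>z. poly (map_poly cplx q) z = 0"
  shows "\<exists>z. poly (map_poly cplx p) z = 0"
proof -
  define n where "n = degree p"
  define P where "P = map_poly eR p"
  have p0: "p \<noteq> 0" using n2 by auto
  have P0: "P \<noteq> 0" using p0 by (simp add: P_def)
  obtain M where M: "size M = degree P" "P = smult (lead_coeff P) (\<Prod>x\<in>#M. [:-x,1:])"
    using alg_closed_imp_factorization[OF P0] by blast
  have lcP: "lead_coeff P = eR (lead_coeff p)" by (simp add: P_def)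
  have lc0: "lead_coeff p \<noteq> 0" using p0 by simp
  obtain rs where rs: "mset rs = M" using ex_mset by blast
  have "degree P = n" by (simp add: P_def n_def)
  then have lrs: "length rs = n" using M(1) rs by (metis size_mset)
  have Pfac: "poly P v = eR (lead_coeff p) * (\<Prod>i<n. (v - rs ! i))" for v
  proof -
    have "poly P v = eR (lead_coeff p) * (\<Prod>x\<in>#M. (v - x))"
      by (subst M(2)) (simp add: lcP poly_linear_prod)
    also have "(\<Prod>x\<in>#M. (v - x)) = (\<Prod>i<n. (v - rs ! i))"
      by (simp add: rs[symmetric] prod_mset_mset_nth lrs)
    finally show ?thesis .
  qed
  have Nl: "(\<Prod>i<n. poly (map_poly eR a) (rs ! i)) \<in> range eR" for a
  proof -
    have "(\<Prod>x\<in>#M. poly (map_poly eR a) x) \<in> range eR"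
      by (rule N_range[OF p0]) (use M(2) lcP in \<open>simp add: P_def\<close>)
    then show ?thesis by (simp add: rs[symmetric] prod_mset_mset_nth lrs)
  qed
  define \<rho> where "\<rho> c i j = rs ! i + rs ! j + eR c * rs ! i * rs ! j" for c i j
  define Pairs where "Pairs = {(i, j). i < j \<and> j < n}"
  have finPairs: "finite Pairs"
    unfolding Pairs_def by (rule finite_subset[of _ "{..<n} \<times> {..<n}"]) auto
  define Qc where "Qc c = (\<Prod>ij\<in>Pairs. [:- \<rho> c (fst ij) (snd ij), 1:])" for c
  have Qc_range: "Qc c \<in> range (map_poly eR)" for c
  proof -
    define B where "B x = (\<Prod>j<n. [: eR x - rs ! j, - 1 - eR c * rs ! j :])" for x
    have Brange: "B x \<in> range (map_poly eR)" for x
    proof (rule interp_range)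
      have "{y. 1 + c * y = 0} \<subseteq> {- 1 / c}"
        by (cases "c = 0") (auto simp: field_simps)
      then have "finite {y. 1 + c * y = 0}" by (rule finite_subset) simp
      then have "infinite (UNIV - {y. 1 + c * y = 0})"
        using infinite_UNIV_char_0 by (metis Diff_infinite_finite)
      then show "infinite {y. 1 + c * y \<noteq> 0}" by (simp add: set_diff_eq)
      show "\<forall>y\<in>{y. 1 + c * y \<noteq> 0}. poly (B x) (eR y) \<in> range eR"
      proof
        fix y assume "y \<in> {y. 1 + c * y \<noteq> 0}"
        then have \<beta>: "1 + c * y \<noteq> 0" by simp
        define \<alpha> where "\<alpha> = (x - y) / (1 + c * y)"
        have "poly (B x) (eR y) = (\<Prod>j<n. eR (1 + c * y) * (eR \<alpha> - rs ! j))"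
          unfolding B_def poly_prod
        proof (rule prod.cong)
          fix j
          have "eR (1 + c * y) * eR \<alpha> = eR x - eR y"
            using \<beta> by (simp add: \<alpha>_def flip: hom_distribs)
          then show "poly [:eR x - rs ! j, - 1 - eR c * rs ! j:] (eR y) =
              eR (1 + c * y) * (eR \<alpha> - rs ! j)"
            by (simp add: algebra_simps hom_distribs)
        qed simp
        also have "\<dots> = eR (1 + c * y) ^ n * (\<Prod>j<n. (eR \<alpha> - rs ! j))"
          by (simp add: prod.distrib)
        also have "(\<Prod>j<n. (eR \<alpha> - rs ! j)) = poly P (eR \<alpha>) / eR (lead_coeff p)"
          using lc0 by (simp add: Pfac)
        also have "poly P (eR \<alpha>) = eR (poly p \<alpha>)" by (simp add: P_def)
        finally have "poly (B x) (eR y) = eR ((1 + c * y) ^ n * (poly p \<alpha> / lead_coeff p))"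
          by (simp add: hom_distribs)
        then show "poly (B x) (eR y) \<in> range eR" by (metis rangeI)
      qed
    qed
    define Phi where "Phi = (\<Prod>i<n. \<Prod>j<n. [:- \<rho> c i j, 1:])"
    have Phi_range: "Phi \<in> range (map_poly eR)"
    proof (rule interp_range[of UNIV])
      show "infinite (UNIV :: 'a set)" by (rule infinite_UNIV_char_0)
      show "\<forall>x\<in>UNIV. poly Phi (eR x) \<in> range eR"
      proof
        fix x :: 'a
        obtain b where b: "B x = map_poly eR b" using Brange by blast
        have eqf: "poly [:- \<rho> c i j, 1:] (eR x) = poly [: eR x - rs ! j, - 1 - eR c * rs ! j :] (rs ! i)"
          for i j by (simp add: \<rho>_def algebra_simps)
        have "poly Phi (eR x) = (\<Prod>i<n. poly (B x) (rs ! i))"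
          unfolding Phi_def B_def poly_prod by (simp only: eqf)
        also have "\<dots> \<in> range eR" using Nl[of b] by (simp add: b)
        finally show "poly Phi (eR x) \<in> range eR" .
      qed
    qed
    define D where "D = (\<Prod>i<n. [:- \<rho> c i i, 1:])"
    have D_range: "D \<in> range (map_poly eR)"
    proof (rule interp_range[of UNIV])
      show "infinite (UNIV :: 'a set)" by (rule infinite_UNIV_char_0)
      show "\<forall>x\<in>UNIV. poly D (eR x) \<in> range eR"
      proof
        fix x :: 'a
        have eqf: "poly [:- \<rho> c i i, 1:] (eR x) = poly (map_poly eR [:x, -2, -c:]) (rs ! i)" for i
          by (simp add: \<rho>_def algebra_simps eR_hom.map_poly_pCons_hom hom_distribs)
        have "poly D (eR x) = (\<Prod>i<n. poly (map_poly eR [:x, -2, -c:]) (rs ! i))"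
          unfolding D_def poly_prod by (simp only: eqf)
        also have "\<dots> \<in> range eR" by (rule Nl)
        finally show "poly D (eR x) \<in> range eR" .
      qed
    qed
    have D0: "D \<noteq> 0" unfolding D_def by (simp add: prod_zero_iff)
    have PhiDQ: "Phi = D * (Qc c * Qc c)"
    proof -
      define g where "g ij = [:- \<rho> c (fst ij) (snd ij), 1:]" for ij
      have gsym: "g (j, i) = g (i, j)" for i j by (simp add: g_def \<rho>_def algebra_simps)
      have gsym': "g (prod.swap ij) = g ij" for ij by (cases ij) (simp add: gsym)
      have "Phi = (\<Prod>ij\<in>{..<n} \<times> {..<n}. g ij)"
        unfolding Phi_def g_def by (simp add: prod.cartesian_product split_def)
      also have "{..<n} \<times> {..<n} = (\<lambda>i. (i, i)) ` {..<n} \<union> (Pairs \<union> prod.swap ` Pairs)"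
      proof
        show "(\<lambda>i. (i, i)) ` {..<n} \<union> (Pairs \<union> prod.swap ` Pairs) \<subseteq> {..<n} \<times> {..<n}"
          by (auto simp: Pairs_def)
        show "{..<n} \<times> {..<n} \<subseteq> (\<lambda>i. (i, i)) ` {..<n} \<union> (Pairs \<union> prod.swap ` Pairs)"
        proof
          fix ab assume "ab \<in> {..<n} \<times> {..<n}"
          then obtain a b where ab': "ab = (a, b)" and ab: "a \<in> {..<n}" "b \<in> {..<n}" by auto
          show "ab \<in> (\<lambda>i. (i, i)) ` {..<n} \<union> (Pairs \<union> prod.swap ` Pairs)"
          proof (cases a b rule: linorder_cases)
            case less
            then show ?thesis using ab ab' by (simp add: Pairs_def)
          next
            case equal
            then show ?thesis using ab ab' by auto
          next
            case greater
            then have "(b, a) \<in> Pairs" using ab by (simp add: Pairs_def)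
            moreover have "ab = prod.swap (b, a)" using ab' by simp
            ultimately show ?thesis by blast
          qed
        qed
      qed
      also have "(\<Prod>ij\<in>(\<lambda>i. (i, i)) ` {..<n} \<union> (Pairs \<union> prod.swap ` Pairs). g ij) =
          (\<Prod>ij\<in>(\<lambda>i. (i, i)) ` {..<n}. g ij) * ((\<Prod>ij\<in>Pairs. g ij) * (\<Prod>ij\<in>prod.swap ` Pairs. g ij))"
      proof -
        have d1: "(\<lambda>i. (i, i)) ` {..<n} \<inter> (Pairs \<union> prod.swap ` Pairs) = {}"
          by (auto simp: Pairs_def)
        have d2: "Pairs \<inter> prod.swap ` Pairs = {}" by (auto simp: Pairs_def)
        have "(\<Prod>ij\<in>(\<lambda>i. (i, i)) ` {..<n} \<union> (Pairs \<union> prod.swap ` Pairs). g ij) =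
          (\<Prod>ij\<in>(\<lambda>i. (i, i)) ` {..<n}. g ij) * (\<Prod>ij\<in>Pairs \<union> prod.swap ` Pairs. g ij)"
          by (rule prod.union_disjoint) (use finPairs d1 in auto)
        also have "(\<Prod>ij\<in>Pairs \<union> prod.swap ` Pairs. g ij) =
          (\<Prod>ij\<in>Pairs. g ij) * (\<Prod>ij\<in>prod.swap ` Pairs. g ij)"
          by (rule prod.union_disjoint) (use finPairs d2 in auto)
        finally show ?thesis .
      qed
      also have "(\<Prod>ij\<in>(\<lambda>i. (i, i)) ` {..<n}. g ij) = D"
        unfolding D_def g_def by (subst prod.reindex) (auto intro: inj_onI)
      also have "(\<Prod>ij\<in>prod.swap ` Pairs. g ij) = (\<Prod>ij\<in>Pairs. g ij)"
        by (subst prod.reindex) (auto intro: inj_onI simp: gsym')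
      also have "(\<Prod>ij\<in>Pairs. g ij) = Qc c" by (simp add: Qc_def g_def)
      finally show ?thesis .
    qed
    have "Qc c * Qc c = Phi div D" using D0 PhiDQ by simp
    moreover obtain phi d where "Phi = map_poly eR phi" "D = map_poly eR d"
      using Phi_range D_range by blast
    ultimately have "Qc c * Qc c = map_poly eR (phi div d)" by (simp add: hom_distribs)
    then have QQ: "Qc c * Qc c \<in> range (map_poly eR)" by blast
    have "lead_coeff (Qc c) = 1" by (simp add: Qc_def lead_coeff_prod)
    then show ?thesis using QQ by (rule sq_range)
  qed
  have cardP: "card Pairs = n * (n - 1) div 2"
    using card_pairs[of n] by (simp add: Pairs_def)
  have degQ: "degree (Qc c) = card Pairs" for c
    unfolding Qc_def by (subst degree_prod_eq_sum_degree) auto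
  have ofnat: "eR (of_nat k) = of_nat k" for k by (simp add: hom_distribs)
  have ex: "\<exists>ij\<in>Pairs. \<exists>w. to_ac w = \<rho> (of_nat k) (fst ij) (snd ij)" for k :: nat
  proof -
    obtain q where q: "Qc (of_nat k) = map_poly eR q" using Qc_range by blast
    have "degree q = degree p * (degree p - 1) div 2"
      using degQ[of "of_nat k"] q cardP by (simp add: n_def)
    then obtain z where z: "poly (map_poly cplx q) z = 0" using IH by blast
    have "poly (Qc (of_nat k)) (to_ac z) = to_ac (poly (map_poly cplx q) z)"
      by (simp add: q map_poly_eR)
    also have "\<dots> = 0" using z by simp
    finally have "(\<Prod>ij\<in>Pairs. (to_ac z - \<rho> (of_nat k) (fst ij) (snd ij))) = 0"
      by (simp add: Qc_def poly_prod)
    then obtain ij where "ij \<in> Pairs" "to_ac z = \<rho> (of_nat k) (fst ij) (snd ij)"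
      using finPairs by (auto simp: prod_zero_iff)
    then show ?thesis by blast
  qed
  then obtain g where g: "\<And>k. g k \<in> Pairs" "\<And>k. \<exists>w. to_ac w = \<rho> (of_nat k) (fst (g k)) (snd (g k))"
    by metis
  have "\<not> inj_on g {..card Pairs}"
  proof
    assume "inj_on g {..card Pairs}"
    then have "card {..card Pairs} \<le> card Pairs"
      by (rule card_inj_on_le) (use g finPairs in auto)
    then show False by simp
  qed
  then obtain k1 k2 where k12: "k1 \<noteq> k2" "g k1 = g k2"
    unfolding inj_on_def by blast
  obtain i j where ij: "g k1 = (i, j)" by (cases "g k1")
  define \<alpha> where "\<alpha> = rs ! i"
  define \<beta> where "\<beta> = rs ! j"
  obtain w1 where w1: "to_ac w1 = \<alpha> + \<beta> + of_nat k1 * \<alpha> * \<beta>"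
    using g(2)[of k1] ij by (auto simp: \<rho>_def \<alpha>_def \<beta>_def ofnat)
  obtain w2 where w2: "to_ac w2 = \<alpha> + \<beta> + of_nat k2 * \<alpha> * \<beta>"
    using g(2)[of k2] ij k12 by (auto simp: \<rho>_def \<alpha>_def \<beta>_def ofnat)
  have iP: "i < n" using g(1)[of k1] ij by (auto simp: Pairs_def)
  define dk where "dk = (of_nat k1 - of_nat k2 :: 'a cpx)"
  have "dk = cplx (of_nat k1 - of_nat k2)" by (simp add: dk_def hom_distribs)
  then have dk0: "dk \<noteq> 0" using k12(1) by simp
  have tdk: "to_ac dk = of_nat k1 - of_nat k2" by (simp add: dk_def hom_distribs)
  define t where "t = (w1 - w2) / dk"
  have "to_ac t * to_ac dk = to_ac (w1 - w2)" using dk0 by (simp add: t_def flip: hom_distribs)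
  also have "\<dots> = (of_nat k1 - of_nat k2) * (\<alpha> * \<beta>)" using w1 w2 by (simp add: hom_distribs algebra_simps)
  finally have "to_ac t * (of_nat k1 - of_nat k2) = (of_nat k1 - of_nat k2) * (\<alpha> * \<beta>)" using tdk by simp
  moreover have "(of_nat k1 - of_nat k2 :: 'a cpx alg_closure) \<noteq> 0" using dk0 tdk by (metis to_ac_eq_0_iff)
  ultimately have tab: "to_ac t = \<alpha> * \<beta>" by simp
  define s where "s = w1 - of_nat k1 * t"
  have sab: "to_ac s = \<alpha> + \<beta>" using w1 tab by (simp add: s_def hom_distribs algebra_simps)
  obtain u :: "'a cpx" where u: "u * u = s * s - 4 * t" using cpx_sqrt by blast
  define z1 where "z1 = (s + u) / 2"
  define z2 where "z2 = (s - u) / 2"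
  have two: "(2::'a cpx) \<noteq> 0"
  proof -
    have "(2::'a cpx) = cplx 2" by (simp add: hom_distribs)
    moreover have "cplx (2::'a) \<noteq> 0" by (simp only: cplx_hom.hom_0_iff)
    ultimately show ?thesis by metis
  qed
  have four: "(4::'a cpx) \<noteq> 0"
  proof -
    have "(4::'a cpx) = cplx 4" by (simp add: hom_distribs)
    moreover have "cplx (4::'a) \<noteq> 0" by (simp only: cplx_hom.hom_0_iff)
    ultimately show ?thesis by metis
  qed
  have z12s: "z1 + z2 = s" using two by (simp add: z1_def z2_def field_simps)
  have z12t: "z1 * z2 = t"
  proof -
    have "z1 * z2 = (s * s - u * u) / (2 * 2)" by (simp add: z1_def z2_def algebra_simps)
    also have "\<dots> = t" using four u by (simp add: field_simps)
    finally show ?thesis .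
  qed
  have "(\<alpha> - to_ac z1) * (\<alpha> - to_ac z2) = \<alpha> * \<alpha> - \<alpha> * to_ac (z1 + z2) + to_ac (z1 * z2)"
    by (simp add: hom_distribs algebra_simps)
  also have "\<dots> = 0" by (simp add: z12s z12t sab tab algebra_simps)
  finally obtain z where z: "\<alpha> = to_ac z" by (metis eq_iff_diff_eq_0 mult_eq_0_iff)
  have "poly P \<alpha> = 0" using iP by (simp add: Pfac \<alpha>_def prod_zero_iff) blast
  then have "to_ac (poly (map_poly cplx p) z) = 0"
    by (simp add: P_def map_poly_eR z)
  then show ?thesis by auto
qed



lemma real_poly_cpx_root:
  fixes p :: "'a::real_closed_field poly"
  assumes "degree p > 0"
  shows "\<exists>z. poly (map_poly cplx p) z = 0"
proof -
  have main: "\<forall>p::'a poly. 0 < degree p \<and> \<not> 2 ^ Suc k dvd degree p \<longrightarrow>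
      (\<exists>z. poly (map_poly cplx p) z = 0)" for k
  proof (induction k)
    case 0
    show ?case
    proof (intro allI impI)
      fix p :: "'a poly" assume "0 < degree p \<and> \<not> 2 ^ Suc 0 dvd degree p"
      then have "odd (degree p)" by simp
      then obtain x where "poly p x = 0" using odd_real_root by blast
      then have "poly (map_poly cplx p) (cplx x) = 0" by simp
      then show "\<exists>z. poly (map_poly cplx p) z = 0" by blast
    qed
  next
    case (Suc k)
    show ?case
    proof (intro allI impI)
      fix p :: "'a poly" assume p: "0 < degree p \<and> \<not> 2 ^ Suc (Suc k) dvd degree p"
      define n where "n = degree p"
      show "\<exists>z. poly (map_poly cplx p) z = 0"
      proof (cases "2 ^ Suc k dvd n")
        case False
        then show ?thesis using Suc.IH p n_def by blast
      next
        case True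
        then obtain m where m: "n = 2 ^ Suc k * m" by blast
        have "odd m"
        proof
          assume "even m"
          then have "2 ^ Suc (Suc k) dvd n" using m by (auto simp: dvd_def)
          then show False using p n_def by simp
        qed
        have n0: "n > 0" using p n_def by simp
        have "2 dvd n" using m by simp
        then have n2: "n \<ge> 2" using n0 by (metis dvd_imp_le le_neq_implies_less nat_dvd_1_iff_1
              numeral_le_one_iff semiring_norm(69) less_one nat_less_le not_less)
        have oddn1: "odd (n - 1)" using \<open>2 dvd n\<close> n0 by simp
        have eqn: "n * (n - 1) div 2 = 2 ^ k * (m * (n - 1))"
          using m by simp
        show ?thesis
        proof (rule laplace_step)
          show "2 \<le> degree p" using n2 n_def by simp
          fix q :: "'a poly" assume q: "degree q = degree p * (degree p - 1) div 2"
          have "\<not> 2 ^ Suc k dvd degree q"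
          proof
            assume "2 ^ Suc k dvd degree q"
            then have "2 ^ k * 2 dvd 2 ^ k * (m * (n - 1))" using q eqn n_def by (simp add: mult.commute)
            then have "2 dvd m * (n - 1)" by (simp add: nat_mult_dvd_cancel_disj)
            then show False using \<open>odd m\<close> oddn1 by simp
          qed
          moreover have "0 < degree q"
          proof -
            have "0 < n * (n - 1) div 2" using eqn \<open>odd m\<close> oddn1 by (metis nat_0_less_mult_iff
                odd_pos zero_less_power pos2)
            then show ?thesis using q n_def by simp
          qed
          ultimately show "\<exists>z. poly (map_poly cplx q) z = 0" using Suc.IH by blast
        qed
      qed
    qed
  qed
  have "\<not> 2 ^ Suc (degree p) dvd degree p"
  proof
    assume "2 ^ Suc (degree p) dvd degree p"
    then have "2 ^ Suc (degree p) \<le> degree p" using assms by (simp add: dvd_imp_le)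
    moreover have "degree p < 2 ^ Suc (degree p)"
      by (metis less_exp less_trans_Suc power_Suc2 lessI less_SucI
          Suc_lessD le_less_trans less_imp_le_nat not_less_eq)
    ultimately show False by simp
  qed
  then show ?thesis using main assms by blast
qed


lemma poly_deg1_eq: "degree r < 2 \<Longrightarrow> r = [:coeff r 0, coeff r 1:]"
proof (rule poly_eqI)
  fix n assume "degree r < 2"
  then show "coeff r n = coeff [:coeff r 0, coeff r 1:] n"
    by (cases n; cases "n - 1") (auto simp: coeff_eq_0 coeff_pCons split: nat.splits)
qed

lemma poly_no_root_sgn:
  fixes p :: "'a::real_closed_field poly"
  assumes "a \<le> b" "\<forall>x. a \<le> x \<and> x \<le> b \<longrightarrow> poly p x \<noteq> 0"
  shows "sgn (poly p a) = sgn (poly p b)"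
  using assms(2)
proof (induction "degree p" arbitrary: p rule: less_induct)
  case less
  show ?case
  proof (cases "degree p = 0")
    case True
    then obtain c where "p = [:c:]" by (metis degree_eq_zeroE)
    then show ?thesis by simp
  next
    case False
    then obtain z where z: "poly (map_poly cplx p) z = 0" using real_poly_cpx_root by blast
    define x where "x = Re z"
    define y where "y = Im z"
    show ?thesis
    proof (cases "y = 0")
      case True
      then have zx: "z = cplx x" by (simp add: x_def y_def cpx_eq_iff)
      then have px: "poly p x = 0" using z by simp
      then obtain q where pq: "p = [:- x, 1:] * q" by (metis dvdE poly_eq_0_iff_dvd)
      have q0: "q \<noteq> 0" using pq False by auto
      have dq: "degree q < degree p" using pq q0 by (simp add: degree_mult_eq del: mult_pCons_left)
      have xab: "\<not> (a \<le> x \<and> x \<le> b)" using less.prems px by blast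
      have "\<forall>t. a \<le> t \<and> t \<le> b \<longrightarrow> poly q t \<noteq> 0" using less.prems pq by auto
      from less.hyps[OF dq this] have sq: "sgn (poly q a) = sgn (poly q b)" .
      have "sgn (a - x) = sgn (b - x)" using xab assms(1) by (auto simp: sgn_if)
      moreover have "poly p t = (t - x) * poly q t" for t
        unfolding pq by (simp add: algebra_simps)
      ultimately show ?thesis using sq by (simp add: sgn_mult)
    next
      case False
      define m where "m = [:x * x + y * y, - 2 * x, 1:]"
      have m0: "m \<noteq> 0" by (simp add: m_def)
      have dm: "degree m = 2" by (simp add: m_def)
      have mz: "poly (map_poly cplx m) z = 0"
        by (simp add: m_def cplx_hom.map_poly_pCons_hom cpx_eq_iff x_def y_def algebra_simps)
      define r where "r = p mod m"
      define q where "q = p div m"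
      have pqr: "p = m * q + r" by (simp add: q_def r_def)
      have dr: "degree r < 2" using dm m0 by (metis degree_mod_less' r_def degree_0 pos2)
      have "map_poly cplx p = map_poly cplx m * map_poly cplx q + map_poly cplx r"
        using pqr by (metis hom_distribs)
      then have "poly (map_poly cplx r) z = 0" using z mz by simp
      moreover have "r = [:coeff r 0, coeff r 1:]" using dr by (rule poly_deg1_eq)
      ultimately have "cplx (coeff r 0) + z * cplx (coeff r 1) = 0"
        by (metis cplx_hom.map_poly_pCons_hom map_poly_0 poly_pCons poly_0 mult_zero_right add_0_right)
      then have "y * coeff r 1 = 0" "coeff r 0 + x * coeff r 1 = 0"
        by (auto simp: cpx_eq_iff x_def y_def)
      then have "coeff r 1 = 0" "coeff r 0 = 0" using False by auto
      then have "r = 0" using \<open>r = [:coeff r 0, coeff r 1:]\<close> by simp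
      then have pq: "p = m * q" using pqr by simp
      have mpos: "poly m t > 0" for t
      proof -
        have "poly m t = (t - x) * (t - x) + y * y" by (simp add: m_def algebra_simps)
        moreover have "y * y > 0" using False
          by (cases "y > 0") (auto simp: mult_neg_neg not_less less_le)
        ultimately show ?thesis by (metis add_nonneg_pos zero_le_square)
      qed
      have q0: "q \<noteq> 0" using pq \<open>degree p \<noteq> 0\<close> by auto
      have dq: "degree q < degree p" using pq q0 m0 dm by (simp add: degree_mult_eq)
      have "\<forall>t. a \<le> t \<and> t \<le> b \<longrightarrow> poly q t \<noteq> 0" using less.prems pq by auto
      from less.hyps[OF dq this] have sq: "sgn (poly q a) = sgn (poly q b)" .
      then show ?thesis using pq mpos by (simp add: sgn_mult)
    qed
  qed
qed


lemma sgn_pow: "sgn (x ^ n) = sgn (x::'a::linordered_idom) ^ n"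
  by (induction n) (simp_all add: sgn_mult)

lemma cof_unique:
  fixes R A :: "'a::field poly"
  assumes R: "R = [:-x, 1:] ^ k * A" and A: "poly A x \<noteq> 0"
  shows "order x R = k" "cofactor R x = A"
proof -
  have A0: "A \<noteq> 0" using A by auto
  have f0: "[:-x, 1:] ^ k \<noteq> 0" by simp
  have "order x R = order x ([:-x, 1:] ^ k) + order x A"
    using R A0 f0 by (simp add: order_mult)
  also have "\<dots> = k" using A by (simp add: order_power_n_n order_0I)
  finally show ok: "order x R = k" .
  show "cofactor R x = A"
    unfolding Defs.cofactor_def ok using R f0 by simp
qed

lemma cof_exists:
  fixes R :: "'a::field poly"
  assumes "R \<noteq> 0"
  shows "R = [:-x, 1:] ^ order x R * cofactor R x" "poly (cofactor R x) x \<noteq> 0"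
proof -
  obtain q where q: "R = [:-x, 1:] ^ order x R * q" "\<not> [:-x, 1:] dvd q"
    using order_decomp[OF assms] by blast
  have "poly q x \<noteq> 0" using q(2) by (simp add: poly_eq_0_iff_dvd)
  with q(1) have "cofactor R x = q" by (rule cof_unique)
  then show "R = [:-x, 1:] ^ order x R * cofactor R x" "poly (cofactor R x) x \<noteq> 0"
    using q \<open>poly q x \<noteq> 0\<close> by auto
qed

lemma cofactor_mult:
  fixes P Q :: "'a::field poly"
  assumes "P \<noteq> 0" "Q \<noteq> 0"
  shows "cofactor (P * Q) x = cofactor P x * cofactor Q x"
    "order x (P * Q) = order x P + order x Q"
proof -
  have "P * Q = [:-x, 1:] ^ (order x P + order x Q) * (cofactor P x * cofactor Q x)"
    using cof_exists(1)[OF assms(1), of x] cof_exists(1)[OF assms(2), of x]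
    by (metis (no_types, lifting) mult.assoc mult.left_commute power_add)
  moreover have "poly (cofactor P x * cofactor Q x) x \<noteq> 0"
    using cof_exists(2)[OF assms(1)] cof_exists(2)[OF assms(2)] by simp
  ultimately show "cofactor (P * Q) x = cofactor P x * cofactor Q x"
    "order x (P * Q) = order x P + order x Q"
    using cof_unique by blast+
qed

lemma order_gt_factor:
  fixes P1 :: "'a::field poly"
  assumes "P1 \<noteq> 0" "poly P1 x = 0"
  shows "order x ([:-x, 1:] ^ k * P1) > k"
proof -
  have "order x ([:-x, 1:] ^ k * P1) = k + order x P1"
    using assms by (simp add: order_mult order_power_n_n)
  moreover have "order x P1 > 0" using assms by (simp add: order_root)
  ultimately show ?thesis by simp
qed

definition rp :: "'a::linordered_field poly \<Rightarrow> 'a \<Rightarrow> 'a" where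
  "rp R x = sgn (poly (cofactor R x) x)"

definition rm :: "'a::linordered_field poly \<Rightarrow> 'a \<Rightarrow> 'a" where
  "rm R x = (-1) ^ order x R * rp R x"

definition sig :: "'a::linordered_field poly \<Rightarrow> 'a poly \<Rightarrow> 'a \<Rightarrow> 'a" where
  "sig P Q x = (if P \<noteq> 0 \<and> Q \<noteq> 0 \<and> val_at P Q x = 0
     then sgn (poly (cofactor P x) x * poly (cofactor Q x) x) else 0)"

lemma rp_rm_noroot:
  fixes R :: "'a::real_closed_field poly"
  assumes R0: "R \<noteq> 0" and ab: "a < b" and nr: "\<forall>t. a < t \<and> t < b \<longrightarrow> poly R t \<noteq> 0"
  shows "rp R a = rm R b"
proof -
  define m where "m = (a + b) / 2"
  have am: "a < m" "m < b" using ab by (simp_all add: m_def field_simps)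
  define A where "A = cofactor R a"
  define k where "k = order a R"
  have RA: "R = [:-a, 1:] ^ k * A" and Aa: "poly A a \<noteq> 0"
    using cof_exists[OF R0, of a] by (simp_all add: A_def k_def)
  have "\<forall>t. a \<le> t \<and> t \<le> m \<longrightarrow> poly A t \<noteq> 0"
  proof (intro allI impI)
    fix t assume t: "a \<le> t \<and> t \<le> m"
    show "poly A t \<noteq> 0"
    proof (cases "t = a")
      case True then show ?thesis using Aa by simp
    next
      case False
      then have "poly R t \<noteq> 0" using nr t am by auto
      then show ?thesis using RA by auto
    qed
  qed
  then have sA: "sgn (poly A a) = sgn (poly A m)"
    using poly_no_root_sgn[of a m A] am by auto
  have "sgn (poly R m) = sgn ((m - a) ^ k) * sgn (poly A m)"
    by (simp add: RA sgn_mult)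
  also have "sgn ((m - a) ^ k) = 1" using am by (simp add: sgn_pow)
  finally have 1: "sgn (poly R m) = rp R a" using sA by (simp add: rp_def A_def)
  define B where "B = cofactor R b"
  define l where "l = order b R"
  have RB: "R = [:-b, 1:] ^ l * B" and Bb: "poly B b \<noteq> 0"
    using cof_exists[OF R0, of b] by (simp_all add: B_def l_def)
  have "\<forall>t. m \<le> t \<and> t \<le> b \<longrightarrow> poly B t \<noteq> 0"
  proof (intro allI impI)
    fix t assume t: "m \<le> t \<and> t \<le> b"
    show "poly B t \<noteq> 0"
    proof (cases "t = b")
      case True then show ?thesis using Bb by simp
    next
      case False
      then have "poly R t \<noteq> 0" using nr t am by auto
      then show ?thesis using RB by auto
    qed
  qed
  then have sB: "sgn (poly B m) = sgn (poly B b)"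
    using poly_no_root_sgn[of m b B] am by auto
  have "sgn (poly R m) = sgn ((m - b) ^ l) * sgn (poly B m)"
    by (simp add: RB sgn_mult)
  also have "sgn ((m - b) ^ l) = (-1) ^ l" using am by (simp add: sgn_pow)
  finally have 2: "sgn (poly R m) = rm R b" using sB by (simp add: rm_def rp_def B_def l_def)
  from 1 2 show ?thesis by simp
qed

lemma telescope:
  fixes R :: "'a::real_closed_field poly"
  assumes R0: "R \<noteq> 0"
  shows "a < b \<Longrightarrow> rp R a - rm R b + (\<Sum>x\<in>{x. a < x \<and> x < b \<and> poly R x = 0}. rp R x - rm R x) = 0"
proof (induction "card {x. a < x \<and> x < b \<and> poly R x = 0}" arbitrary: b rule: less_induct)
  case (less b)
  define Z where "Z = {x. a < x \<and> x < b \<and> poly R x = 0}"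
  have finZ: "finite Z"
    unfolding Z_def using poly_roots_finite[OF R0] by (rule rev_finite_subset) auto
  show ?case
  proof (cases "Z = {}")
    case True
    then have "rp R a = rm R b" using rp_rm_noroot[OF R0 less.prems] by (auto simp: Z_def)
    moreover have e: "{x. a < x \<and> x < b \<and> poly R x = 0} = {}" using True unfolding Z_def .
    ultimately show ?thesis by (simp only: e sum.empty)
  next
    case False
    define x where "x = Max Z"
    have xZ: "x \<in> Z" using finZ False by (simp add: x_def)
    have xmax: "\<And>t. t \<in> Z \<Longrightarrow> t \<le> x" using finZ by (simp add: x_def)
    have ax: "a < x" "x < b" using xZ by (auto simp: Z_def)
    have Zx: "{t. a < t \<and> t < x \<and> poly R t = 0} = Z - {x}"
      using xmax ax by (auto simp: Z_def) (meson le_less)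
    have "card {t. a < t \<and> t < x \<and> poly R t = 0} < card Z"
      using Zx finZ xZ by (metis card_Diff1_less)
    then have IH: "rp R a - rm R x + (\<Sum>t\<in>Z - {x}. rp R t - rm R t) = 0"
      using less.hyps[of x] ax Zx by (simp add: Z_def)
    have "\<forall>t. x < t \<and> t < b \<longrightarrow> poly R t \<noteq> 0"
    proof (intro allI impI)
      fix t assume t: "x < t \<and> t < b"
      show "poly R t \<noteq> 0"
      proof
        assume "poly R t = 0"
        then have "t \<in> Z" using t ax by (simp add: Z_def)
        then show False using xmax t by fastforce
      qed
    qed
    then have xb: "rp R x = rm R b" using rp_rm_noroot[OF R0 ax(2)] by blast
    have "(\<Sum>t\<in>Z. rp R t - rm R t) = (rp R x - rm R x) + (\<Sum>t\<in>Z - {x}. rp R t - rm R t)"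
      using finZ xZ by (simp add: sum.remove)
    then show ?thesis using IH xb by (simp add: Z_def[symmetric])
  qed
qed


lemma powi_neg1: "(-1::'a::field) powi (int a - int b) = (-1) ^ (a + b)"
proof -
  have "(-1::'a) powi (int a - int b) = (-1) powi int a / (-1) powi int b"
    by (rule power_int_diff) simp
  also have "\<dots> = (-1) ^ a / (-1) ^ b" by simp
  also have "(-1::'a) ^ a / (-1) ^ b = (-1) ^ a * (-1) ^ b"
    by (cases "even b") simp_all
  finally show ?thesis by (simp add: power_add)
qed

lemma ind_pair_plus:
  fixes P Q :: "'a::linordered_field poly"
  assumes "P \<noteq> 0" "Q \<noteq> 0"
  shows "ind_plus P Q x + ind_plus Q P x = rp (P * Q) x / 2 - sig P Q x / 2"
proof -
  have vQP: "val_at Q P x = - val_at P Q x" by (simp add: Defs.val_at_def)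
  have rp: "rp (P * Q) x = sgn (poly (cofactor P x) x * poly (cofactor Q x) x)"
    by (simp add: rp_def cofactor_mult assms)
  consider "val_at P Q x < 0" | "val_at P Q x = 0" | "val_at P Q x > 0" by linarith
  then show ?thesis
    by cases (auto simp: Defs.ind_plus_def sig_def vQP rp assms mult.commute)
qed

lemma ind_pair_minus:
  fixes P Q :: "'a::linordered_field poly"
  assumes "P \<noteq> 0" "Q \<noteq> 0"
  shows "ind_minus P Q x + ind_minus Q P x = rm (P * Q) x / 2 - sig P Q x / 2"
proof -
  have vQP: "val_at Q P x = - val_at P Q x" by (simp add: Defs.val_at_def)
  have rp: "rp (P * Q) x = sgn (poly (cofactor P x) x * poly (cofactor Q x) x)"
    by (simp add: rp_def cofactor_mult assms)
  have rm: "rm (P * Q) x = (-1) ^ (order x P + order x Q) * rp (P * Q) x"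
    by (simp add: rm_def cofactor_mult assms)
  have p1: "(-1::'a) powi val_at P Q x = (-1) ^ (order x P + order x Q)"
    by (simp add: Defs.val_at_def powi_neg1)
  have p2: "(-1::'a) powi (- val_at P Q x) = (-1) ^ (order x P + order x Q)"
    using vQP by (simp add: Defs.val_at_def powi_neg1 add.commute)
  consider "val_at P Q x < 0" | "val_at P Q x = 0" | "val_at P Q x > 0" by linarith
  then show ?thesis
  proof cases
    case 1
    then show ?thesis using assms
      by (simp add: Defs.ind_minus_def sig_def vQP rm rp p1)
  next
    case 2
    then have "order x P = order x Q" by (simp add: Defs.val_at_def)
    then have "(-1::'a) ^ (order x P + order x Q) = 1" by (simp flip: mult_2)
    then show ?thesis using assms 2
      by (simp add: Defs.ind_minus_def sig_def vQP rm rp)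
  next
    case 3
    then show ?thesis using assms
      by (simp add: Defs.ind_minus_def sig_def vQP rm rp p2 mult.commute)
  qed
qed

lemma ind_at_pair:
  fixes P Q :: "'a::linordered_field poly"
  assumes "P \<noteq> 0" "Q \<noteq> 0"
  shows "ind_at P Q x + ind_at Q P x = (rp (P * Q) x - rm (P * Q) x) / 2"
  using ind_pair_plus[OF assms, of x] ind_pair_minus[OF assms, of x]
  by (simp add: Defs.ind_at_def field_simps)

lemma ind_at_nz:
  fixes P Q :: "'a::linordered_field poly"
  assumes "ind_at P Q x \<noteq> 0"
  shows "P \<noteq> 0" "Q \<noteq> 0" "poly Q x = 0"
proof -
  have c: "P \<noteq> 0 \<and> Q \<noteq> 0 \<and> val_at P Q x < 0"
    using assms by (auto simp: Defs.ind_at_def Defs.ind_plus_def Defs.ind_minus_def split: if_splits)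
  then show "P \<noteq> 0" "Q \<noteq> 0" by auto
  have "order x Q > 0" using c by (simp add: Defs.val_at_def)
  then show "poly Q x = 0" by (simp add: order_root)
qed

lemma ind_lt_pair:
  fixes P Q :: "'a::real_closed_field poly"
  assumes P0: "P \<noteq> 0" and Q0: "Q \<noteq> 0" and ab: "a < b"
  shows "ind_lt a b P Q + ind_lt a b Q P = (sig P Q b - sig P Q a) / 2"
proof -
  define R where "R = P * Q"
  have R0: "R \<noteq> 0" using P0 Q0 by (simp add: R_def)
  define Z where "Z = {x. a < x \<and> x < b \<and> poly R x = 0}"
  have finZ: "finite Z"
    unfolding Z_def using poly_roots_finite[OF R0] by (rule rev_finite_subset) auto
  have s1: "(\<Sum>x\<in>{x. a < x \<and> x < b \<and> ind_at P Q x \<noteq> 0}. ind_at P Q x) = (\<Sum>x\<in>Z. ind_at P Q x)"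
    by (rule sum.mono_neutral_left[OF finZ]) (auto simp: Z_def R_def dest: ind_at_nz)
  have s2: "(\<Sum>x\<in>{x. a < x \<and> x < b \<and> ind_at Q P x \<noteq> 0}. ind_at Q P x) = (\<Sum>x\<in>Z. ind_at Q P x)"
    by (rule sum.mono_neutral_left[OF finZ]) (auto simp: Z_def R_def dest: ind_at_nz)
  have sigsym: "sig Q P x = sig P Q x" for x
    by (simp add: sig_def Defs.val_at_def mult.commute)
  have "ind_lt a b P Q + ind_lt a b Q P =
      (ind_plus P Q a + ind_plus Q P a) + (\<Sum>x\<in>Z. ind_at P Q x + ind_at Q P x)
      - (ind_minus P Q b + ind_minus Q P b)"
    by (simp add: Defs.ind_lt_def s1 s2 sum.distrib)
  also have "\<dots> = (rp R a / 2 - sig P Q a / 2) + (\<Sum>x\<in>Z. (rp R x - rm R x) / 2)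
      - (rm R b / 2 - sig P Q b / 2)"
  proof -
    have e1: "ind_plus P Q a + ind_plus Q P a = rp R a / 2 - sig P Q a / 2"
      using ind_pair_plus[OF P0 Q0] by (simp add: R_def)
    have e2: "ind_minus P Q b + ind_minus Q P b = rm R b / 2 - sig P Q b / 2"
      using ind_pair_minus[OF P0 Q0] by (simp add: R_def)
    have e3: "ind_at P Q x + ind_at Q P x = (rp R x - rm R x) / 2" for x
      using ind_at_pair[OF P0 Q0] by (simp add: R_def)
    show ?thesis by (simp only: e1 e2 e3)
  qed
  also have "(\<Sum>x\<in>Z. (rp R x - rm R x) / 2) = (\<Sum>x\<in>Z. rp R x - rm R x) / 2"
    by (simp add: sum_divide_distrib)
  also have "(\<Sum>x\<in>Z. rp R x - rm R x) = rm R b - rp R a"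
    using telescope[OF R0 ab] by (simp add: Z_def algebra_simps)
  finally show ?thesis by (simp add: field_simps)
qed


lemma ind_zero [simp]:
  "ind_plus 0 Q x = 0" "ind_plus P 0 x = 0" "ind_minus 0 Q x = 0" "ind_minus P 0 x = 0"
  by (simp_all add: Defs.ind_plus_def Defs.ind_minus_def)

lemma ind_lt_zero [simp]: "ind_lt a b 0 Q = 0" "ind_lt a b P 0 = 0"
  by (simp_all add: Defs.ind_lt_def Defs.ind_at_def)

lemma shift_decomp:
  fixes P Q :: "'a::field poly"
  assumes P0: "P \<noteq> 0" and Q0: "Q \<noteq> 0" and lt: "order x P < order x Q"
  shows "order x (P + smult r Q) = order x P"
    "poly (cofactor (P + smult r Q) x) x = poly (cofactor P x) x"
proof -
  define k where "k = order x P"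
  define l where "l = order x Q"
  have "P + smult r Q = [:-x,1:] ^ k * (cofactor P x + smult r ([:-x,1:] ^ (l - k) * cofactor Q x))"
  proof -
    have "[:-x,1:] ^ l = [:-x,1:] ^ k * [:-x,1:] ^ (l - k)"
      using lt by (simp add: k_def l_def flip: power_add)
    then show ?thesis
      using cof_exists(1)[OF P0, of x] cof_exists(1)[OF Q0, of x]
      by (metis (no_types, lifting) distrib_left k_def l_def mult.assoc mult_smult_right)
  qed
  moreover have "poly (cofactor P x + smult r ([:-x,1:] ^ (l - k) * cofactor Q x)) x = poly (cofactor P x) x"
    using lt by (simp add: k_def l_def)
  moreover have "poly (cofactor P x) x \<noteq> 0" using cof_exists(2)[OF P0] .
  ultimately have dec: "P + smult r Q = [:-x,1:] ^ k * (cofactor P x + smult r ([:-x,1:] ^ (l - k) * cofactor Q x))"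
    and Ax: "poly (cofactor P x + smult r ([:-x,1:] ^ (l - k) * cofactor Q x)) x \<noteq> 0"
    and Ax': "poly (cofactor P x + smult r ([:-x,1:] ^ (l - k) * cofactor Q x)) x = poly (cofactor P x) x"
    using lt by (auto simp: k_def l_def power_0_left)
  show "order x (P + smult r Q) = order x P"
    using cof_unique(1)[OF dec Ax] by (simp add: k_def)
  show "poly (cofactor (P + smult r Q) x) x = poly (cofactor P x) x"
    using cof_unique(2)[OF dec Ax] Ax' by simp
qed

lemma shift_ge:
  fixes P Q :: "'a::field poly"
  assumes Q0: "Q \<noteq> 0" and ge: "order x Q \<le> order x P" and S0: "P + smult r Q \<noteq> 0"
  shows "order x Q \<le> order x (P + smult r Q)"
proof -
  have "[:-x,1:] ^ order x Q dvd P"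
  proof (cases "P = 0")
    case False
    then show ?thesis using ge by (simp add: order_divides)
  qed simp
  moreover have "[:-x,1:] ^ order x Q dvd Q" by (simp add: order_divides)
  ultimately have "[:-x,1:] ^ order x Q dvd P + smult r Q"
    by (simp add: dvd_add dvd_smult)
  then show ?thesis using S0 by (simp add: order_divides)
qed

lemma ind_shift:
  fixes P Q :: "'a::linordered_field poly"
  shows "ind_plus (P + smult r Q) Q x = ind_plus P Q x"
    "ind_minus (P + smult r Q) Q x = ind_minus P Q x"
proof -
  have "ind_plus (P + smult r Q) Q x = ind_plus P Q x \<and> ind_minus (P + smult r Q) Q x = ind_minus P Q x"
  proof (cases "Q = 0")
    case True then show ?thesis by simp
  next
    case Q0: False
    show ?thesis
    proof (cases "P \<noteq> 0 \<and> order x P < order x Q")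
      case True
      then have P0: "P \<noteq> 0" and lt: "order x P < order x Q" by auto
      have S0: "P + smult r Q \<noteq> 0"
      proof
        assume "P + smult r Q = 0"
        then have "poly (cofactor (P + smult r Q) x) x = 0"
          by (simp add: Defs.cofactor_def)
        then show False using shift_decomp(2)[OF P0 Q0 lt] cof_exists(2)[OF P0] by simp
      qed
      have v: "val_at (P + smult r Q) Q x = val_at P Q x"
        using shift_decomp(1)[OF P0 Q0 lt] by (simp add: Defs.val_at_def)
      show ?thesis
        using S0 P0 Q0 v shift_decomp(2)[OF P0 Q0 lt]
        by (simp add: Defs.ind_plus_def Defs.ind_minus_def)
    next
      case False
      then have r: "val_at P Q x \<ge> 0 \<or> P = 0" by (auto simp: Defs.val_at_def)
      have "\<not> (P + smult r Q \<noteq> 0 \<and> val_at (P + smult r Q) Q x < 0)"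
      proof
        assume a: "P + smult r Q \<noteq> 0 \<and> val_at (P + smult r Q) Q x < 0"
        have ge: "order x Q \<le> order x P \<or> P = 0" using False by auto
        have "order x Q \<le> order x (P + smult r Q)"
        proof (cases "P = 0")
          case True
          then have "P + smult r Q = smult r Q" by simp
          moreover have "r \<noteq> 0" using a True by auto
          ultimately show ?thesis by (simp add: order_smult)
        next
          case False
          then show ?thesis using shift_ge[OF Q0 _ ] a ge by auto
        qed
        then show False using a by (simp add: Defs.val_at_def)
      qed
      then show ?thesis using r
        by (auto simp: Defs.ind_plus_def Defs.ind_minus_def)
    qed
  qed
  then show "ind_plus (P + smult r Q) Q x = ind_plus P Q x"
    "ind_minus (P + smult r Q) Q x = ind_minus P Q x" by auto
qed

lemma cofactor_smult:
  fixes P :: "'a::field poly"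
  assumes "c \<noteq> 0" "P \<noteq> 0"
  shows "order x (smult c P) = order x P" "cofactor (smult c P) x = smult c (cofactor P x)"
proof -
  have "smult c P = [:-x,1:] ^ order x P * smult c (cofactor P x)"
    using cof_exists(1)[OF assms(2), of x] by (metis mult_smult_right)
  moreover have "poly (smult c (cofactor P x)) x \<noteq> 0"
    using assms cof_exists(2)[OF assms(2)] by simp
  ultimately show "order x (smult c P) = order x P" "cofactor (smult c P) x = smult c (cofactor P x)"
    using cof_unique by blast+
qed

lemma ind_smult:
  fixes P Q :: "'a::linordered_field poly"
  assumes c: "c \<noteq> 0" and d: "d \<noteq> 0"
  shows "ind_plus (smult c P) (smult d Q) x = sgn c * sgn d * ind_plus P Q x"
    "ind_minus (smult c P) (smult d Q) x = sgn c * sgn d * ind_minus P Q x"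
proof -
  have "ind_plus (smult c P) (smult d Q) x = sgn c * sgn d * ind_plus P Q x \<and>
        ind_minus (smult c P) (smult d Q) x = sgn c * sgn d * ind_minus P Q x"
  proof (cases "P = 0 \<or> Q = 0")
    case True then show ?thesis by auto
  next
    case False
    then have P0: "P \<noteq> 0" and Q0: "Q \<noteq> 0" by auto
    have v: "val_at (smult c P) (smult d Q) x = val_at P Q x"
      using cofactor_smult[OF c P0] cofactor_smult[OF d Q0] by (simp add: Defs.val_at_def)
    have s: "sgn (poly (cofactor (smult c P) x) x * poly (cofactor (smult d Q) x) x) =
        sgn c * sgn d * sgn (poly (cofactor P x) x * poly (cofactor Q x) x)"
      using cofactor_smult[OF c P0] cofactor_smult[OF d Q0] by (simp add: sgn_mult algebra_simps)
    show ?thesis using P0 Q0 c d v s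
      by (simp add: Defs.ind_plus_def Defs.ind_minus_def)
  qed
  then show "ind_plus (smult c P) (smult d Q) x = sgn c * sgn d * ind_plus P Q x"
    "ind_minus (smult c P) (smult d Q) x = sgn c * sgn d * ind_minus P Q x" by auto
qed

lemma ind_lt_scale:
  fixes P Q P' Q' :: "'a::linordered_field poly"
  assumes k: "k \<noteq> 0"
    and hp: "\<And>x. ind_plus P' Q' x = k * ind_plus P Q x"
    and hm: "\<And>x. ind_minus P' Q' x = k * ind_minus P Q x"
  shows "ind_lt a b P' Q' = k * ind_lt a b P Q"
proof -
  have ha: "ind_at P' Q' x = k * ind_at P Q x" for x
    by (simp add: Defs.ind_at_def hp hm algebra_simps)
  then have "{x. a < x \<and> x < b \<and> ind_at P' Q' x \<noteq> 0} = {x. a < x \<and> x < b \<and> ind_at P Q x \<noteq> 0}"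
    using k by auto
  then show ?thesis
    by (simp add: Defs.ind_lt_def ha hp hm sum_distrib_left algebra_simps)
qed

lemma ind_lt_shift: "ind_lt a b (P + smult r Q) Q = ind_lt a b P Q"
proof -
  have "ind_lt a b (P + smult r Q) Q = 1 * ind_lt a b P Q"
    by (rule ind_lt_scale) (simp_all add: ind_shift)
  then show ?thesis by simp
qed

lemma ind_lt_smult:
  fixes P Q :: "'a::linordered_field poly"
  assumes "c \<noteq> 0" "d \<noteq> 0"
  shows "ind_lt a b (smult c P) (smult d Q) = sgn c * sgn d * ind_lt a b P Q"
proof (rule ind_lt_scale)
  show "sgn c * sgn d \<noteq> 0" using assms by (simp add: sgn_0_0)
  show "ind_plus (smult c P) (smult d Q) x = sgn c * sgn d * ind_plus P Q x" for x
    by (rule ind_smult(1)[OF assms])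
  show "ind_minus (smult c P) (smult d Q) x = sgn c * sgn d * ind_minus P Q x" for x
    by (rule ind_smult(2)[OF assms])
qed


lemma edge_rot:
  fixes P Q :: "'a::real_closed_field poly" and ga gb :: 'a
  assumes gb: "gb \<noteq> 0" and ab: "a < b"
  shows "ind_lt a b (smult ga P - smult gb Q) (smult gb P + smult ga Q) =
    ind_lt a b P Q - (sig Q (P + smult (ga / gb) Q) b - sig Q (P + smult (ga / gb) Q) a) / 2"
proof -
  define S where "S = P + smult (ga / gb) Q"
  define k where "k = (ga * ga + gb * gb) / gb"
  have g2: "gb * gb > 0" using gb
    by (cases "gb > 0") (auto simp: mult_neg_neg not_less less_le)
  have pos: "ga * ga + gb * gb > 0" using g2 by (metis add_nonneg_pos zero_le_square)
  have sk: "sgn (- k) * sgn gb = -1"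
  proof (cases "gb > 0")
    case True
    then have "k > 0" using pos by (simp add: k_def)
    then show ?thesis using True by simp
  next
    case False
    then have "gb < 0" using gb by simp
    then have "k < 0" using pos by (simp add: k_def divide_pos_neg)
    then show ?thesis using \<open>gb < 0\<close> by simp
  qed
  have k0: "- k \<noteq> 0" using sk by auto
  have e1: "smult ga P - smult gb Q = smult (- k) Q + smult (ga / gb) (smult gb S)"
    by (rule poly_eqI) (simp add: S_def k_def field_simps gb)
  have e2: "smult gb P + smult ga Q = smult gb S"
    by (rule poly_eqI) (simp add: S_def field_simps gb)
  have "ind_lt a b (smult ga P - smult gb Q) (smult gb P + smult ga Q) =
      ind_lt a b (smult (- k) Q) (smult gb S)"
    by (simp only: e1 e2 ind_lt_shift)
  also have "\<dots> = - ind_lt a b Q S"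
    using ind_lt_smult[OF k0 gb] sk by simp
  finally have L: "ind_lt a b (smult ga P - smult gb Q) (smult gb P + smult ga Q) = - ind_lt a b Q S" .
  have R: "ind_lt a b P Q = ind_lt a b S Q" by (simp add: S_def ind_lt_shift)
  show ?thesis
  proof (cases "Q = 0 \<or> S = 0")
    case True
    then show ?thesis using L R by (auto simp: sig_def S_def[symmetric])
  next
    case False
    then have "ind_lt a b Q S + ind_lt a b S Q = (sig Q S b - sig Q S a) / 2"
      using ind_lt_pair[OF _ _ ab] by auto
    then show ?thesis using L R by (simp add: S_def[symmetric] algebra_simps)
  qed
qed


lemma pcompose_pow: "pcompose (p ^ n) q = (pcompose p q) ^ n"
  by (induction n) (simp_all add: pcompose_mult)

lemma re_poly_pCons [simp]: "re_poly (pCons a H) = pCons (Re a) (re_poly H)"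
  unfolding Defs.re_poly_def by (rule Polynomial.map_poly_pCons) (simp add: zero_cpx_def)
lemma im_poly_pCons [simp]: "im_poly (pCons a H) = pCons (Im a) (im_poly H)"
  unfolding Defs.im_poly_def by (rule Polynomial.map_poly_pCons) (simp add: zero_cpx_def)
lemma re_poly_0 [simp]: "re_poly 0 = 0" and im_poly_0 [simp]: "im_poly 0 = 0"
  by (simp_all add: Defs.re_poly_def Defs.im_poly_def)

lemma coeff_re_poly [simp]: "coeff (re_poly H) n = Re (coeff H n)"
  by (simp add: Defs.re_poly_def coeff_map_poly)
lemma coeff_im_poly [simp]: "coeff (im_poly H) n = Im (coeff H n)"
  by (simp add: Defs.im_poly_def coeff_map_poly)

lemma re_poly_add: "re_poly (A + B) = re_poly A + re_poly B"
  by (rule poly_eqI) simp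
lemma im_poly_add: "im_poly (A + B) = im_poly A + im_poly B"
  by (rule poly_eqI) simp

lemma re_poly_smult: "re_poly (smult g H) = smult (Re g) (re_poly H) - smult (Im g) (im_poly H)"
  by (rule poly_eqI) simp
lemma im_poly_smult: "im_poly (smult g H) = smult (Im g) (re_poly H) + smult (Re g) (im_poly H)"
  by (rule poly_eqI) (simp add: algebra_simps)

lemma poly_re_poly: "poly (re_poly H) x = Re (poly H (cplx x))"
  by (induction H) simp_all
lemma poly_im_poly: "poly (im_poly H) x = Im (poly H (cplx x))"
  by (induction H) simp_all

lemma re_im_poly_mult_real:
  fixes A :: "'a::linordered_field poly"
  shows "re_poly (map_poly cplx A * B) = A * re_poly B \<and> im_poly (map_poly cplx A * B) = A * im_poly B"
proof (induction A)
  case 0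
  then show ?case by simp
next
  case (pCons a A)
  have "map_poly cplx (pCons a A) * B = smult (cplx a) B + pCons 0 (map_poly cplx A * B)"
    by (simp add: cplx_hom.map_poly_pCons_hom)
  then show ?case using pCons
    by (simp add: re_poly_add im_poly_add re_poly_smult im_poly_smult)
qed

definition kap :: "'a::linordered_field \<Rightarrow> 'a cpx \<Rightarrow> 'a" where
  "kap r c = (if Im c \<noteq> 0 \<and> Re c + r * Im c \<noteq> 0 then sgn (Im c * (Re c + r * Im c)) else 0)"

lemma sig_local:
  fixes P1 Q1 :: "'a::linordered_field poly"
  assumes P: "P = [:-x, 1:] ^ k * P1" and Q: "Q = [:-x, 1:] ^ k * Q1"
    and nz: "poly P1 x \<noteq> 0 \<or> poly Q1 x \<noteq> 0"
  shows "sig P Q x = (if poly P1 x \<noteq> 0 \<and> poly Q1 x \<noteq> 0 then sgn (poly P1 x * poly Q1 x) else 0)"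
proof (cases "poly P1 x \<noteq> 0 \<and> poly Q1 x \<noteq> 0")
  case True
  then have "order x P = k" "cofactor P x = P1" "order x Q = k" "cofactor Q x = Q1"
    using cof_unique[OF P] cof_unique[OF Q] by auto
  moreover have "P \<noteq> 0" "Q \<noteq> 0" using True P Q by auto
  ultimately show ?thesis using True by (simp add: sig_def Defs.val_at_def)
next
  case False
  show ?thesis
  proof (cases "P = 0 \<or> Q = 0")
    case True then show ?thesis using False by (auto simp: sig_def)
  next
    case nz0: False
    have "val_at P Q x \<noteq> 0"
    proof (cases "poly P1 x = 0")
      case True
      then have "poly Q1 x \<noteq> 0" using nz by auto
      then have oQ: "order x Q = k" using cof_unique[OF Q] by auto
      have "P1 \<noteq> 0" using nz0 P by auto
      then have "order x P > k" using order_gt_factor[of P1 x k] True P by simp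
      then show ?thesis using oQ by (simp add: Defs.val_at_def)
    next
      case False
      then have "poly Q1 x = 0" using \<open>\<not> (poly P1 x \<noteq> 0 \<and> poly Q1 x \<noteq> 0)\<close> by auto
      have oP: "order x P = k" using cof_unique[OF P] False by auto
      have "Q1 \<noteq> 0" using nz0 Q by auto
      then have "order x Q > k" using order_gt_factor[of Q1 x k] \<open>poly Q1 x = 0\<close> Q by simp
      then show ?thesis using oP by (simp add: Defs.val_at_def)
    qed
    then show ?thesis using False by (auto simp: sig_def)
  qed
qed

lemma lin_pow_cplx: "[:- cplx x, 1:] ^ k = map_poly cplx ([:- (x::'a::linordered_field), 1:] ^ k)"
proof -
  have b: "map_poly cplx [:- x, 1:] = [:- cplx x, 1:]"
    by (simp add: Polynomial.map_poly_pCons cpx_eq_iff)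
  show ?thesis
  proof (induction k)
    case (Suc k)
    then show ?case by (simp only: power_Suc cplx_poly.hom_mult b)
  qed simp
qed

lemma sig_edge:
  fixes H A :: "'a::linordered_field cpx poly"
  assumes H: "H = [:- cplx x, 1:] ^ k * A" and c: "poly A (cplx x) = c" "c \<noteq> 0"
  shows "sig (im_poly H) (re_poly H + smult r (im_poly H)) x = kap r c"
proof -
  have ri: "re_poly H = [:-x,1:] ^ k * re_poly A" "im_poly H = [:-x,1:] ^ k * im_poly A"
    by (simp_all only: H lin_pow_cplx re_im_poly_mult_real)
  have S: "re_poly H + smult r (im_poly H) = [:-x,1:] ^ k * (re_poly A + smult r (im_poly A))"
    using ri by (simp add: algebra_simps)
  have v1: "poly (im_poly A) x = Im c" using c by (simp add: poly_im_poly)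
  have v2: "poly (re_poly A + smult r (im_poly A)) x = Re c + r * Im c"
    using c by (simp add: poly_re_poly poly_im_poly)
  have "Im c \<noteq> 0 \<or> Re c + r * Im c \<noteq> 0"
    using c(2) by (auto simp: cpx_eq_iff)
  then show ?thesis
    using sig_local[OF ri(2) S] v1 v2 by (simp add: kap_def)
qed

lemma kap_real: "d = 1 \<or> d = -1 \<Longrightarrow> kap r (cplx d * c) = kap r c"
  by (auto simp: kap_def algebra_simps)


interpretation cnj_hom: field_hom "cnj :: 'a::linordered_field cpx \<Rightarrow> 'a cpx"
  by unfold_locales (simp_all add: Defs.cnj_def cpx_eq_iff)

interpretation cnj_poly: map_poly_idom_hom "cnj :: 'a::linordered_field cpx \<Rightarrow> 'a cpx" ..

lemma cnj_cplx [simp]: "cnj (cplx t) = cplx (t::'a::linordered_field)"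
  by (simp add: Defs.cnj_def cplx_def)

lemma poly_map_cnj_real: "poly (map_poly cnj W) (cplx t) = cnj (poly W (cplx (t::'a::linordered_field)))"
  using cnj_hom.poly_map_poly[of W "cplx t"] by simp

lemma map_cnj_lin_pow: "map_poly cnj ([:- cplx t, 1:] ^ j) = [:- cplx (t::'a::linordered_field), 1:] ^ j"
proof -
  have b: "map_poly cnj [:- cplx t, 1:] = [:- cplx t, 1:]"
    by (simp add: Polynomial.map_poly_pCons cpx_eq_iff Defs.cnj_def)
  show ?thesis
  proof (induction j)
    case (Suc j)
    then show ?case by (simp only: power_Suc cnj_poly.hom_mult b)
  qed simp
qed

lemma vertex:
  fixes F G :: "'a::linordered_field cpx poly"
  assumes F0: "F \<noteq> 0" and G0: "G \<noteq> 0" and ev: "even (cval F G (Cpx Xv Yv))"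
  shows "\<exists>k A B c d. edge_prod (restr_h F Yv) (restr_h G Yv) = [:- cplx Xv, 1:] ^ k * A \<and>
    poly A (cplx Xv) = c \<and>
    edge_prod (restr_v F Xv) (restr_v G Xv) = [:- cplx Yv, 1:] ^ k * B \<and>
    poly B (cplx Yv) = cplx d * c \<and> c \<noteq> 0 \<and> (d = 1 \<or> d = -1)"
proof -
  define z where "z = Cpx Xv Yv"
  define ii where "ii = (Cpx 0 1 :: 'a cpx)"
  define m where "m = order z F"
  define F1 where "F1 = cofactor F z"
  have F: "F = [:-z, 1:] ^ m * F1" "poly F1 z \<noteq> 0"
    using cof_exists[OF F0, of z] by (simp_all add: m_def F1_def)
  define n where "n = order z G"
  define G1 where "G1 = cofactor G z"
  have G: "G = [:-z, 1:] ^ n * G1" "poly G1 z \<noteq> 0"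
    using cof_exists[OF G0, of z] by (simp_all add: n_def G1_def)
  define u where "u = [:Cpx 0 Yv, 1:]"
  define v where "v = [:Cpx Xv 0, ii:]"
  have hu: "pcompose [:-z, 1:] u = [:- cplx Xv, 1:]"
    by (simp add: u_def z_def pcompose_pCons cpx_eq_iff)
  have hv: "pcompose [:-z, 1:] v = smult ii [:- cplx Yv, 1:]"
    by (simp add: v_def z_def ii_def pcompose_pCons cpx_eq_iff)
  have pu: "poly u (cplx Xv) = z" by (simp add: u_def z_def cpx_eq_iff)
  have pv: "poly v (cplx Yv) = z" by (simp add: v_def z_def ii_def cpx_eq_iff)
  have rhF: "restr_h F Yv = [:- cplx Xv, 1:] ^ m * pcompose F1 u"
    by (simp only: Defs.restr_h_def u_def[symmetric] F(1) pcompose_mult pcompose_pow hu)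
  have rhG: "restr_h G Yv = [:- cplx Xv, 1:] ^ n * pcompose G1 u"
    by (simp only: Defs.restr_h_def u_def[symmetric] G(1) pcompose_mult pcompose_pow hu)
  have rvF: "restr_v F Xv = smult (ii ^ m) ([:- cplx Yv, 1:] ^ m) * pcompose F1 v"
    by (simp only: Defs.restr_v_def ii_def[symmetric] v_def[symmetric] F(1) pcompose_mult
        pcompose_pow hv smult_power)
  have rvG: "restr_v G Xv = smult (ii ^ n) ([:- cplx Yv, 1:] ^ n) * pcompose G1 v"
    by (simp only: Defs.restr_v_def ii_def[symmetric] v_def[symmetric] G(1) pcompose_mult
        pcompose_pow hv smult_power)
  define A where "A = pcompose F1 u * map_poly cnj (pcompose G1 u)"
  define B where "B = smult (ii ^ m * cnj ii ^ n) (pcompose F1 v * map_poly cnj (pcompose G1 v))"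
  define c where "c = poly F1 z * cnj (poly G1 z)"
  have "edge_prod (restr_h F Yv) (restr_h G Yv) =
      ([:- cplx Xv, 1:] ^ m * pcompose F1 u) * ([:- cplx Xv, 1:] ^ n * map_poly cnj (pcompose G1 u))"
    by (simp only: Defs.edge_prod_def rhF rhG cnj_poly.hom_mult map_cnj_lin_pow)
  also have "\<dots> = [:- cplx Xv, 1:] ^ (m + n) * A" by (simp only: A_def power_add mult_ac)
  finally have eh: "edge_prod (restr_h F Yv) (restr_h G Yv) = [:- cplx Xv, 1:] ^ (m + n) * A" .
  have "edge_prod (restr_v F Xv) (restr_v G Xv) =
      (smult (ii ^ m) ([:- cplx Yv, 1:] ^ m) * pcompose F1 v) *
      (smult (cnj ii ^ n) ([:- cplx Yv, 1:] ^ n) * map_poly cnj (pcompose G1 v))"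
    by (simp only: Defs.edge_prod_def rvF rvG cnj_poly.hom_mult cnj_hom.map_poly_hom_smult
        cnj_hom.hom_power map_cnj_lin_pow)
  also have "\<dots> = [:- cplx Yv, 1:] ^ (m + n) * B"
    by (simp add: B_def power_add mult_ac)
  finally have ev': "edge_prod (restr_v F Xv) (restr_v G Xv) = [:- cplx Yv, 1:] ^ (m + n) * B" .
  have pA: "poly A (cplx Xv) = c"
    by (simp add: A_def c_def poly_map_cnj_real poly_pcompose pu)
  have pB: "poly B (cplx Yv) = (ii ^ m * cnj ii ^ n) * c"
    by (simp add: B_def c_def poly_map_cnj_real poly_pcompose pv)
  have c0: "c \<noteq> 0" using F(2) G(2) by (simp add: c_def)
  have "even (m + n)"
  proof -
    have "even (int m - int n)" using ev by (simp add: Defs.cval_def m_def n_def z_def)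
    then have "even (int m - int n + 2 * int n)" by simp
    then have "even (int (m + n))" by simp
    then show ?thesis by simp
  qed
  then obtain e where e: "m + n = 2 * e" by (metis evenE)
  define d where "d = ((-1::'a) ^ (n + e))"
  have ii2: "ii * ii = -1" by (simp add: ii_def cpx_eq_iff)
  have cii: "cnj ii = - ii" by (simp add: ii_def Defs.cnj_def cpx_eq_iff)
  have ii2: "ii * ii = -1" by (simp add: ii_def cpx_eq_iff)
  have cii: "cnj ii = - ii" by (simp add: ii_def Defs.cnj_def cpx_eq_iff)
  have s1: "cnj ii ^ n = (-1) ^ n * ii ^ n" by (simp only: cii power_minus[of ii n])
  have s2: "ii ^ (m + n) = (-1) ^ e" by (simp only: e power_mult power2_eq_square ii2)
  have s3: "(-1::'a cpx) ^ n * (-1) ^ e = cplx d"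
    by (simp only: d_def power_add[symmetric] cplx_hom.hom_power cplx_hom.hom_uminus cplx_hom.hom_one)
  have "ii ^ m * cnj ii ^ n = (-1) ^ n * ii ^ (m + n)"
    by (simp only: s1 power_add mult.left_commute)
  also have "\<dots> = cplx d" by (simp only: s2 s3)
  finally have dd: "ii ^ m * cnj ii ^ n = cplx d" .
  have d1: "d = 1 \<or> d = -1" by (cases "even (n + e)") (simp_all add: d_def)
  show ?thesis
    using eh ev' pA pB c0 d1 unfolding dd by blast
qed


lemma vertex_K:
  fixes F G :: "'a::linordered_field cpx poly"
  assumes "F \<noteq> 0" "G \<noteq> 0" "even (cval F G (Cpx Xv Yv))"
  defines "H \<equiv> edge_prod (restr_h F Yv) (restr_h G Yv)"
    and "V \<equiv> edge_prod (restr_v F Xv) (restr_v G Xv)"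
  shows "sig (im_poly H) (re_poly H + smult r (im_poly H)) Xv =
         sig (im_poly V) (re_poly V + smult r (im_poly V)) Yv"
proof -
  obtain k A B c d where v: "H = [:- cplx Xv, 1:] ^ k * A" "poly A (cplx Xv) = c"
    "V = [:- cplx Yv, 1:] ^ k * B" "poly B (cplx Yv) = cplx d * c" "c \<noteq> 0" "d = 1 \<or> d = -1"
    using vertex[OF assms(1-3)] unfolding H_def V_def by blast
  have "cplx d \<noteq> 0" using v(6) by auto
  then have dc: "cplx d * c \<noteq> 0" using v(5) by simp
  show ?thesis
    using sig_edge[OF v(1) v(2) v(5)] sig_edge[OF v(3) v(4) dc] kap_real[OF v(6)] by simp
qed

lemma edge_smult_h:
  "edge_prod (restr_h (smult g F) y) (restr_h G y) = smult g (edge_prod (restr_h F y) (restr_h G y))"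
  by (simp add: Defs.edge_prod_def Defs.restr_h_def pcompose_smult)

lemma edge_smult_v:
  "edge_prod (restr_v (smult g F) x) (restr_v G x) = smult g (edge_prod (restr_v F x) (restr_v G x))"
  by (simp add: Defs.edge_prod_def Defs.restr_v_def pcompose_smult)

lemma cind_lt: "a < b \<Longrightarrow> cind a b P Q = ind_lt a b P Q"
  and cind_gt: "a < b \<Longrightarrow> cind b a P Q = - ind_lt a b P Q"
  by (simp_all add: Defs.cind_def)

theorem lemma3p5:
  fixes F G :: "'a::real_closed_field cpx poly" and \<gamma> :: "'a cpx"
    and x0 x1 y0 y1 :: 'a
  assumes "F \<noteq> 0" and "G \<noteq> 0" and "\<gamma> \<noteq> 0"
    and "x0 < x1" and "y0 < y1"
    and "\<forall>z\<in>{Cpx x0 y0, Cpx x1 y0, Cpx x1 y1, Cpx x0 y1}. even (cval F G z)"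
  shows "wind_frac F G x0 x1 y0 y1 = wind_frac (smult \<gamma> F) G x0 x1 y0 y1"
proof -
  note F0 = assms(1) and G0 = assms(2) and g0 = assms(3) and x01 = assms(4) and y01 = assms(5)
  have ev: "even (cval F G (Cpx x0 y0))" "even (cval F G (Cpx x1 y0))"
    "even (cval F G (Cpx x1 y1))" "even (cval F G (Cpx x0 y1))" using assms(6) by auto
  define H0 where "H0 = edge_prod (restr_h F y0) (restr_h G y0)"
  define V1 where "V1 = edge_prod (restr_v F x1) (restr_v G x1)"
  define H1 where "H1 = edge_prod (restr_h F y1) (restr_h G y1)"
  define V0 where "V0 = edge_prod (restr_v F x0) (restr_v G x0)"
  define I where "I a b H = ind_lt a b (re_poly H) (im_poly H)" for a b :: 'a and H :: "'a cpx poly"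
  define I' where "I' a b H = ind_lt a b (re_poly (smult \<gamma> H)) (im_poly (smult \<gamma> H))" for a b :: 'a and H :: "'a cpx poly"
  have w1: "wind_frac F G x0 x1 y0 y1 = (I x0 x1 H0 + I y0 y1 V1 - I x0 x1 H1 - I y0 y1 V0) / 2"
    using x01 y01
    by (simp add: Defs.wind_frac_def Let_def H0_def V1_def H1_def V0_def I_def cind_lt cind_gt)
  have w2: "wind_frac (smult \<gamma> F) G x0 x1 y0 y1 = (I' x0 x1 H0 + I' y0 y1 V1 - I' x0 x1 H1 - I' y0 y1 V0) / 2"
    using x01 y01
    by (simp add: Defs.wind_frac_def Let_def H0_def V1_def H1_def V0_def I'_def cind_lt cind_gt
        edge_smult_h edge_smult_v)
  define ga where "ga = Re \<gamma>"
  define gb where "gb = Im \<gamma>"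
  have I'eq: "I' a b H = ind_lt a b (smult ga (re_poly H) - smult gb (im_poly H))
      (smult gb (re_poly H) + smult ga (im_poly H))" for a b H
    by (simp add: I'_def re_poly_smult im_poly_smult ga_def gb_def)
  show ?thesis
  proof (cases "gb = 0")
    case True
    then have ga0: "ga \<noteq> 0" using g0 by (auto simp: ga_def gb_def cpx_eq_iff)
    have "I' a b H = I a b H" for a b H
      using ind_lt_smult[OF ga0 ga0, of a b "re_poly H" "im_poly H"] ga0
      by (simp add: I'eq I_def True sgn_mult[symmetric] sgn_0_0)
    then show ?thesis using w1 w2 by simp
  next
    case False
    define r where "r = ga / gb"
    define K where "K H t = sig (im_poly H) (re_poly H + smult r (im_poly H)) t" for H :: "'a cpx poly" and t :: 'a
    have I'K: "I' a b H = I a b H - (K H b - K H a) / 2" if "a < b" for a b H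
      using edge_rot[OF False that, of ga "re_poly H" "im_poly H"]
      by (simp add: I'eq I_def K_def r_def)
    have k1: "K H0 x0 = K V0 y0"
      unfolding K_def H0_def V0_def by (rule vertex_K[OF F0 G0 ev(1)])
    have k2: "K H0 x1 = K V1 y0"
      unfolding K_def H0_def V1_def by (rule vertex_K[OF F0 G0 ev(2)])
    have k3: "K H1 x1 = K V1 y1"
      unfolding K_def H1_def V1_def by (rule vertex_K[OF F0 G0 ev(3)])
    have k4: "K H1 x0 = K V0 y1"
      unfolding K_def H1_def V0_def by (rule vertex_K[OF F0 G0 ev(4)])
    show ?thesis
      using w1 w2 I'K[OF x01] I'K[OF y01] k1 k2 k3 k4 by (simp add: field_simps)
  qed
qed


end
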